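(* Let $\mathfrak{h}$ be either $\mathfrak{sl}_2(\mathbb{R})$ or $\mathfrak{so}(3)$ (viewed as a left Leibniz algebra), and let $\rhd$ be an analytic linear Lie rack structure on $\mathfrak{h}$ such that $[\cdot,\cdot]_{\rhd}$ is the Lie bracket of $\mathfrak{h}$. Then there exists an analytic function $F:\mathbb{R}\to\mathbb{R}$, $F(u)=1+\sum_{k\ge1}a_ku^k$, such that for all $x,y\in\mathfrak{h}$, \[x\rhd y=\exp\big(F(\langle x,x\rangle)\mathrm{ad}_x\big)(y),\qquad \langle x,x\rangle=\tfrac12\mathrm{tr}(\mathrm{ad}_x\circ\mathrm{ad}_x).\] Consequently $\mathfrak{h}$ is rigid.
   Context: $\mathfrak{sl}_2(\mathbb{R})$ is the Lie algebra of traceless real $2\times2$ matrices, $\mathfrak{so}(3)$ that of skew-symmetric real $3\times3$ matrices; $\mathrm{ad}_x(y)=[x,y]$. A linear Lie rack structure on a finite-dimensional real vector space $V$ is a smooth map $\rhd:V\times V\to V$ with each $\mathrm{L}_x:y\mapsto x\rhd y$ a linear bijection, $x\rhd(y\rhd z)=(x\rhd y)\rhd(x\rhd z)$, $x\rhd0=0$ and $\mathrm{L}_0=\mathrm{Id}$; it is analytic if $x\rhd y=y+\sum_{n\ge1}A_{n,1}(x,\ldots,x,y)$ with $A_{n,1}$ $(n+1)$-multilinear and symmetric in the first $n$ arguments. Its associated bracket is $[u,v]_{\rhd}=\frac{d}{dt}\big|_{t=0}\mathrm{L}_{tu}(v)$. A left Leibniz algebra (bracket with $[u,[v,w]]=[[u,v],w]+[v,[u,w]]$)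 is rigid if every analytic linear Lie rack structure $\rhd$ on it with $[\cdot,\cdot]_{\rhd}=[\cdot,\cdot]$ has the form $x\rhd y=\exp(F(P(x,\ldots,x))\mathrm{ad}_x)(y)$ with $F:\mathbb{R}\to\mathbb{R}$ analytic, $F(0)=1$, and $P$ a real symmetric multilinear $p$-form satisfying $\sum_{i=1}^pP(x_1,\ldots,[y,x_i],\ldots,x_p)=0$ for all $y,x_1,\ldots,x_p$. *)

theory Defs
  imports "HOL-Analysis.Analysis"
begin

text \<open>Lie algebras are modelled on real^3 via a fixed basis.
  sl2(R): coordinates w.r.t. the basis H, E, F with [H,E]=2E, [H,F]=-2F, [E,F]=H.
  so(3): coordinates w.r.t. the standard basis L1, L2, L3 of skew matrices, [Li,Lj]=eps_ijk Lk
  (i.e. the cross product).\<close>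

definition sl2_bracket :: "real^3 \<Rightarrow> real^3 \<Rightarrow> real^3" where
  "sl2_bracket x y = vector [x$2 * y$3 - x$3 * y$2,
                             2 * (x$1 * y$2 - x$2 * y$1),
                             2 * (x$3 * y$1 - x$1 * y$3)]"

definition so3_bracket :: "real^3 \<Rightarrow> real^3 \<Rightarrow> real^3" where
  "so3_bracket x y = vector [x$2 * y$3 - x$3 * y$2,
                             x$3 * y$1 - x$1 * y$3,
                             x$1 * y$2 - x$2 * y$1]"

text \<open>C-infinity maps between real normed vector spaces (everywhere defined).\<close>
coinductive smooth_map :: "('a::real_normed_vector \<Rightarrow> 'b::real_normed_vector) \<Rightarrow> bool" where
  "(\<And>x. (f has_derivative f' x) (at x)) \<Longrightarrow> (\<And>v. smooth_map (\<lambda>x. f' x v)) \<Longrightarrow> smooth_map f"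

definition real_analytic :: "(real \<Rightarrow> real) \<Rightarrow> bool" where
  "real_analytic F \<longleftrightarrow> (\<forall>x0. \<exists>r>0. \<exists>c::nat \<Rightarrow> real.
      \<forall>x. \<bar>x - x0\<bar> < r \<longrightarrow> (\<lambda>k. c k * (x - x0) ^ k) sums F x)"

text \<open>An (n+1)-multilinear map A(x_0,...,x_{n-1}, y), symmetric in the first n arguments.
  The first n arguments are given as a function nat => 'a; only indices < n matter.\<close>
definition sym_multilin_map :: "nat \<Rightarrow> ((nat \<Rightarrow> 'a::real_vector) \<Rightarrow> 'a \<Rightarrow> 'b::real_vector) \<Rightarrow> bool" where
  "sym_multilin_map n A \<longleftrightarrow>
     (\<forall>xs y. (\<forall>i<n. linear (\<lambda>t. A (xs(i := t)) y)) \<and> linear (\<lambda>y. A xs y)) \<and>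
     (\<forall>xs ys y. (\<forall>i<n. xs i = ys i) \<longrightarrow> A xs y = A ys y) \<and>
     (\<forall>xs p y. p permutes {..<n} \<longrightarrow> A (xs \<circ> p) y = A xs y)"

definition sym_multilin_form :: "nat \<Rightarrow> ((nat \<Rightarrow> 'a::real_vector) \<Rightarrow> real) \<Rightarrow> bool" where
  "sym_multilin_form p P \<longleftrightarrow>
     (\<forall>xs. \<forall>i<p. linear (\<lambda>t. P (xs(i := t)))) \<and>
     (\<forall>xs ys. (\<forall>i<p. xs i = ys i) \<longrightarrow> P xs = P ys) \<and>
     (\<forall>xs q. q permutes {..<p} \<longrightarrow> P (xs \<circ> q) = P xs)"

definition linear_lie_rack :: "('a::real_normed_vector \<Rightarrow> 'a \<Rightarrow> 'a) \<Rightarrow> bool" where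
  "linear_lie_rack rk \<longleftrightarrow>
     smooth_map (\<lambda>(x, y). rk x y) \<and>
     (\<forall>x. linear (rk x) \<and> bij (rk x)) \<and>
     (\<forall>x y z. rk x (rk y z) = rk (rk x y) (rk x z)) \<and>
     (\<forall>x. rk x 0 = 0) \<and>
     rk 0 = id"

definition analytic_linear_lie_rack :: "('a::real_normed_vector \<Rightarrow> 'a \<Rightarrow> 'a) \<Rightarrow> bool" where
  "analytic_linear_lie_rack rk \<longleftrightarrow> linear_lie_rack rk \<and>
     (\<exists>A :: nat \<Rightarrow> (nat \<Rightarrow> 'a) \<Rightarrow> 'a \<Rightarrow> 'a.
        (\<forall>n\<ge>1. sym_multilin_map n (A n)) \<and>
        (\<forall>x y. (\<lambda>n. A (Suc n) (\<lambda>_. x) y) sums (rk x y - y)))"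

definition rack_bracket_is :: "('a::real_normed_vector \<Rightarrow> 'a \<Rightarrow> 'a) \<Rightarrow> ('a \<Rightarrow> 'a \<Rightarrow> 'a) \<Rightarrow> bool" where
  "rack_bracket_is rk br \<longleftrightarrow>
     (\<forall>u v. ((\<lambda>t. rk (t *\<^sub>R u) v) has_vector_derivative br u v) (at 0))"

definition lin_exp :: "('a::real_normed_vector \<Rightarrow> 'a) \<Rightarrow> 'a \<Rightarrow> 'a" where
  "lin_exp A y = (\<Sum>n. (1 / fact n) *\<^sub>R (A ^^ n) y)"

definition killing_half :: "(real^'n \<Rightarrow> real^'n \<Rightarrow> real^'n) \<Rightarrow> real^'n \<Rightarrow> real" where
  "killing_half br x = (1/2) * (\<Sum>i\<in>UNIV. (br x (br x (axis i 1))) $ i)"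

definition rigid :: "('a::real_normed_vector \<Rightarrow> 'a \<Rightarrow> 'a) \<Rightarrow> bool" where
  "rigid br \<longleftrightarrow> (\<forall>rk. analytic_linear_lie_rack rk \<and> rack_bracket_is rk br \<longrightarrow>
     (\<exists>F p P. real_analytic F \<and> F 0 = 1 \<and> sym_multilin_form p P \<and>
        (\<forall>y xs. (\<Sum>i<p. P (xs(i := br y (xs i)))) = 0) \<and>
        (\<forall>x y. rk x y = lin_exp (\<lambda>z. F (P (\<lambda>_. x)) *\<^sub>R br x z) y)))"

end

theory Submission
  imports Defs "HOL-Complex_Analysis.Complex_Analysis"
begin


no_notation fps_nth (infixl \<open>$\<close> 75)


lemma lin_bl: "linear (f :: real^'n \<Rightarrow> real^'m) \<Longrightarrow> bounded_linear f"
  using linear_conv_bounded_linear by blast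

lemma lin_expand:
  assumes "linear (f :: real^'n \<Rightarrow> real^'m)"
  shows "f v = (\<Sum>j\<in>UNIV. (v$j) *\<^sub>R f (axis j 1))"
proof -
  have "f v = f (\<Sum>j\<in>UNIV. (v$j) *\<^sub>R axis j 1)"
    using basis_expansion[of v] by (simp add: scalar_mult_eq_scaleR)
  also have "\<dots> = (\<Sum>j\<in>UNIV. (v$j) *\<^sub>R f (axis j 1))"
    using assms by (simp add: linear_sum linear_cmul)
  finally show ?thesis .
qed

lemma comp_deriv:
  fixes w :: "real \<Rightarrow> real^'n"
  assumes "(w has_vector_derivative w') (at s)"
  shows "((\<lambda>s. w s $ j) has_field_derivative (w' $ j)) (at s)"
  using bounded_linear.has_vector_derivative[OF bounded_linear_vec_nth assms, of j]
  by (simp add: has_real_derivative_iff_has_vector_derivative)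

locale rackctx =
  fixes br :: "real^3 \<Rightarrow> real^3 \<Rightarrow> real^3" and rk :: "real^3 \<Rightarrow> real^3 \<Rightarrow> real^3"
  assumes an: "analytic_linear_lie_rack rk" and rb: "rack_bracket_is rk br"
begin

lemma lin: "linear (rk x)"
  using an by (auto simp: analytic_linear_lie_rack_def linear_lie_rack_def)
lemma bij: "bij (rk x)"
  using an by (auto simp: analytic_linear_lie_rack_def linear_lie_rack_def)
lemma rid: "rk x (rk y z) = rk (rk x y) (rk x z)"
  using an by (auto simp: analytic_linear_lie_rack_def linear_lie_rack_def)
lemma rk0: "rk 0 z = z"
  using an by (auto simp: analytic_linear_lie_rack_def linear_lie_rack_def)
lemma drk: "((\<lambda>t. rk (t *\<^sub>R u) v) has_vector_derivative br u v) (at 0)"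
  using rb by (auto simp: rack_bracket_is_def)

lemma smoothD: "\<exists>D. \<forall>p. ((\<lambda>(x, y). rk x y) has_derivative D p) (at p)"
proof -
  have "smooth_map (\<lambda>(x, y). rk x y)"
    using an unfolding analytic_linear_lie_rack_def linear_lie_rack_def by blast
  then show ?thesis by (cases rule: smooth_map.cases) blast
qed

definition Dr where "Dr = (SOME D. \<forall>p. ((\<lambda>(x, y). rk x y) has_derivative D p) (at p))"

lemma Dr: "((\<lambda>(x, y). rk x y) has_derivative Dr p) (at p)"
  using someI_ex[OF smoothD] unfolding Dr_def by blast

lemma chain_pair:
  assumes a: "(a has_vector_derivative a') (at t)" and b: "(b has_vector_derivative b') (at t)"
  shows "((\<lambda>s. rk (a s) (b s)) has_vector_derivative Dr (a t, b t) (a', b')) (at t)"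
proof -
  have ab: "((\<lambda>s. (a s, b s)) has_vector_derivative (a', b')) (at t)"
    using a b by (rule has_vector_derivative_Pair)
  have "(((\<lambda>(x, y). rk x y) \<circ> (\<lambda>s. (a s, b s))) has_derivative (Dr (a t, b t) \<circ> (\<lambda>h. h *\<^sub>R (a', b')))) (at t)"
    apply (rule diff_chain_at)
    using ab apply (simp add: has_vector_derivative_def)
    using Dr[of "(a t, b t)"] by simp
  moreover have "bounded_linear (Dr (a t, b t))" using Dr has_derivative_bounded_linear by blast
  moreover have "(\<lambda>x. Dr (a t, b t) (x *\<^sub>R a', x *\<^sub>R b')) = (\<lambda>x. x *\<^sub>R Dr (a t, b t) (a', b'))"
  proof
    fix x :: real
    have "(x *\<^sub>R a', x *\<^sub>R b') = x *\<^sub>R (a', b')" by simp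
    then show "Dr (a t, b t) (x *\<^sub>R a', x *\<^sub>R b') = x *\<^sub>R Dr (a t, b t) (a', b')"
      using \<open>bounded_linear (Dr (a t, b t))\<close> by (metis bounded_linear.linear linear_cmul)
  qed
  ultimately show ?thesis
    by (simp add: has_vector_derivative_def o_def)
qed

lemma inf_eq: "Dr (y, z) (br u y, br u z) = br u (rk y z)"
proof -
  have 1: "((\<lambda>t. rk (t *\<^sub>R u) (rk y z)) has_vector_derivative br u (rk y z)) (at 0)" by (rule drk)
  have 2: "((\<lambda>t. rk (rk (t *\<^sub>R u) y) (rk (t *\<^sub>R u) z)) has_vector_derivative Dr (y, z) (br u y, br u z)) (at 0)"
    using chain_pair[OF drk drk, of u y u z] by (simp add: rk0)
  have "(\<lambda>t. rk (rk (t *\<^sub>R u) y) (rk (t *\<^sub>R u) z)) = (\<lambda>t. rk (t *\<^sub>R u) (rk y z))"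
    using rid by metis
  then show ?thesis using vector_derivative_unique_at[OF 2] 1 by simp
qed

lemma autom: "rk x (br u v) = br (rk x u) (rk x v)"
proof -
  have bl: "bounded_linear (rk x)" using lin lin_bl by blast
  have 1: "((\<lambda>t. rk x (rk (t *\<^sub>R u) v)) has_vector_derivative rk x (br u v)) (at 0)"
    using bounded_linear.has_vector_derivative[OF bl drk] by simp
  have 2: "((\<lambda>t. rk (t *\<^sub>R rk x u) (rk x v)) has_vector_derivative br (rk x u) (rk x v)) (at 0)" by (rule drk)
  have "(\<lambda>t. rk x (rk (t *\<^sub>R u) v)) = (\<lambda>t. rk (t *\<^sub>R rk x u) (rk x v))"
    using lin rid by (metis linear_cmul)
  then show ?thesis using vector_derivative_unique_at[OF 1] 2 by simp
qed

lemma equiv_flow: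
  fixes g :: "real \<Rightarrow> real^3 \<Rightarrow> real^3"
  assumes lin_g: "\<And>s. linear (g s)" and g0: "\<And>y. g 0 y = y"
  and dg: "\<And>s y. ((\<lambda>s. g s y) has_vector_derivative br u (g s y)) (at s)"
  and ginv: "\<And>s y. g (-s) (g s y) = y"
  and gcomm: "\<And>s y. g s (br u y) = br u (g s y)"
  and linbr: "linear (br u)"
  shows "rk (g s x) (g s z) = g s (rk x z)"
proof -
  define w where "w s = rk (g s x) (g s z)" for s
  have wd: "(w has_vector_derivative br u (w s)) (at s)" for s
  proof -
    have "((\<lambda>s. rk (g s x) (g s z)) has_vector_derivative Dr (g s x, g s z) (br u (g s x), br u (g s z))) (at s)"
      by (rule chain_pair[OF dg dg])
    then show ?thesis unfolding w_def inf_eq by simp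
  qed
  define \<psi> where "\<psi> s = (\<Sum>j\<in>UNIV. (w s $ j) *\<^sub>R g (-s) (axis j 1))" for s
  have \<psi>eq: "\<psi> s = g (-s) (w s)" for s
    unfolding \<psi>_def using lin_expand[OF lin_g, of "-s" "w s"] by simp
  have \<psi>d: "(\<psi> has_vector_derivative 0) (at s)" for s
  proof -
    have gm: "((\<lambda>s. g (-s) e) has_vector_derivative (- br u (g (-s) e))) (at s)" for e
    proof -
      have "(((\<lambda>s. g s e) \<circ> uminus) has_vector_derivative ((-1) *\<^sub>R br u (g (-s) e))) (at s)"
        apply (rule vector_diff_chain_at)
        apply (rule derivative_eq_intros | simp)+
        using dg by simp
      then show ?thesis by (simp add: o_def)
    qed
    have "(\<psi> has_vector_derivative (\<Sum>j\<in>UNIV. (w s $ j) *\<^sub>R (- br u (g (-s) (axis j 1))) + (br u (w s) $ j) *\<^sub>R g (-s) (axis j 1))) (at s)"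
      unfolding \<psi>_def
      by (intro has_vector_derivative_sum has_vector_derivative_scaleR comp_deriv wd gm)
    moreover have "(\<Sum>j\<in>UNIV. (w s $ j) *\<^sub>R (- br u (g (-s) (axis j 1))) + (br u (w s) $ j) *\<^sub>R g (-s) (axis j 1)) = 0"
    proof -
      have l2: "linear (\<lambda>v. br u (g (-s) v))" using linbr lin_g linear_compose[of "g (-s)" "br u"] by (simp add: o_def)
      have "(\<Sum>j\<in>UNIV. (w s $ j) *\<^sub>R (- br u (g (-s) (axis j 1)))) = - br u (g (-s) (w s))"
        using lin_expand[OF l2, of "w s"] by (simp add: sum_negf)
      moreover have "(\<Sum>j\<in>UNIV. (br u (w s) $ j) *\<^sub>R g (-s) (axis j 1)) = br u (g (-s) (w s))"
        using lin_expand[OF lin_g, of "-s" "br u (w s)"] gcomm by simp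
      ultimately show ?thesis by (subst sum.distrib) simp
    qed
    ultimately show ?thesis by simp
  qed
  obtain c where c: "\<And>s. \<psi> s = c"
    using has_vector_derivative_zero_constant[of UNIV \<psi>] \<psi>d by auto
  have "\<psi> s = \<psi> 0" using c by simp
  then have "g (-s) (w s) = rk x z" using \<psi>eq g0 by (simp add: w_def)
  then have "g s (g (-s) (w s)) = g s (rk x z)" by simp
  then show ?thesis using ginv[of "-s" "w s"] by (simp add: w_def)
qed

end


lemma powser_unique0:
  fixes c :: "nat \<Rightarrow> real"
  assumes S: "\<And>t. (\<lambda>n. c n * t^n) sums 0"
  shows "c n = 0"
proof (induction n rule: less_induct)
  case (less n)
  have sh: "(\<lambda>m. c (m + n) * t^m) sums 0" if "t \<noteq> 0" for t
  proof -
    have "(\<lambda>m. c (m + n) * t^(m + n)) sums 0"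
      using S[of t] less by (subst sums_iff_shift) simp
    then have "(\<lambda>m. inverse (t^n) * (c (m + n) * t^(m + n))) sums (inverse (t^n) * 0)"
      by (rule sums_mult)
    then show ?thesis using that by (simp add: power_add field_simps)
  qed
  define h where "h t = (\<Sum>m. c (m + n) * t^m)" for t :: real
  have sm1: "summable (\<lambda>m. c (m + n) * 1^m)" using sh[of 1] by (auto simp: sums_iff)
  have "isCont h 0" unfolding h_def by (rule isCont_powser[OF sm1]) simp
  then have l1: "h \<midarrow>0\<rightarrow> h 0" by (simp add: isCont_def)
  have "\<forall>\<^sub>F t in at 0. h t = 0"
    unfolding eventually_at_filter
    by (rule always_eventually) (auto simp: h_def intro!: sums_unique[symmetric] sh)
  then have l2: "h \<midarrow>0\<rightarrow> 0" by (simp add: tendsto_eventually)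
  have "h 0 = c n"
  proof -
    have "(\<lambda>m. c (m + n) * 0^m) sums c n"
      using sums_single[of 0 "\<lambda>_. c n"] by (simp add: power_0_left if_distrib cong: if_cong)
    then show ?thesis unfolding h_def by (simp add: sums_iff)
  qed
  then show ?case using LIM_unique[OF l1 l2] by simp
qed

lemma powser_unique_vec:
  fixes a b :: "nat \<Rightarrow> real^'n"
  assumes A: "\<And>t. (\<lambda>n. t^n *\<^sub>R a n) sums f t" and B: "\<And>t. (\<lambda>n. t^n *\<^sub>R b n) sums f t"
  shows "a = b"
proof -
  have "a n $ j = b n $ j" for n j
  proof -
    have "(\<lambda>n. (a n $ j - b n $ j) * t^n) sums 0" for t
    proof -
      have "(\<lambda>n. (t^n *\<^sub>R a n) $ j - (t^n *\<^sub>R b n) $ j) sums (f t $ j - f t $ j)"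
        by (intro sums_diff sums_vec_nth A B)
      then show ?thesis by (simp add: algebra_simps)
    qed
    then have "a n $ j - b n $ j = 0" by (rule powser_unique0)
    then show ?thesis by simp
  qed
  then show ?thesis by (auto simp: vec_eq_iff)
qed

lemma multi_hom:
  assumes "sym_multilin_map n A"
  shows "A (\<lambda>_. t *\<^sub>R x) z = t^n *\<^sub>R A (\<lambda>_. x) z"
proof -
  from assms have L: "\<And>xs y i. i < n \<Longrightarrow> linear (\<lambda>t. A (xs(i := t)) y)"
    and E: "\<And>xs ys y. (\<forall>i<n. xs i = ys i) \<Longrightarrow> A xs y = A ys y"
    unfolding sym_multilin_map_def by blast+
  have "j \<le> n \<Longrightarrow> A (\<lambda>i. if i < j then t *\<^sub>R x else x) z = t^j *\<^sub>R A (\<lambda>_. x) z" for j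
  proof (induction j)
    case 0 then show ?case by simp
  next
    case (Suc j)
    define f where "f = (\<lambda>i. if i < j then t *\<^sub>R x else x)"
    have f1: "(\<lambda>i. if i < Suc j then t *\<^sub>R x else x) = f(j := t *\<^sub>R x)"
      by (auto simp: f_def fun_eq_iff)
    have f2: "f(j := x) = f" by (auto simp: f_def fun_eq_iff)
    have lj: "linear (\<lambda>s. A (f(j := s)) z)" using L Suc.prems by simp
    have "A (f(j := t *\<^sub>R x)) z = t *\<^sub>R A (f(j := x)) z"
      using linear_cmul[OF lj, of t x] by simp
    then show ?case using Suc f1 f2 by (simp add: f_def)
  qed
  from this[of n] show ?thesis
    using E[of "\<lambda>i. if i < n then t *\<^sub>R x else x" "\<lambda>_. t *\<^sub>R x" z] by simp
qed


lemma multi_poly: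
  assumes "sym_multilin_map n A"
  shows "\<exists>p. \<forall>s. (A (\<lambda>_. x0 + s *\<^sub>R w) z) $ j = poly p s"
proof -
  from assms have L: "\<And>xs y i. i < n \<Longrightarrow> linear (\<lambda>t. A (xs(i := t)) y)"
    and E: "\<And>xs ys y. (\<forall>i<n. xs i = ys i) \<Longrightarrow> A xs y = A ys y"
    unfolding sym_multilin_map_def by blast+
  have "k \<le> n \<Longrightarrow> \<forall>xs. \<exists>p. \<forall>s. (A (\<lambda>i. if i < k then x0 + s *\<^sub>R w else xs i) z) $ j = poly p s" for k
  proof (induction k)
    case 0 then show ?case by (auto intro!: exI[of _ "[:_:]"])
  next
    case (Suc k)
    show ?case
    proof
      fix xs
      obtain p1 where p1: "\<forall>s. (A (\<lambda>i. if i < k then x0 + s *\<^sub>R w else (xs(k := x0)) i) z) $ j = poly p1 s"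
        using Suc by force
      obtain p2 where p2: "\<forall>s. (A (\<lambda>i. if i < k then x0 + s *\<^sub>R w else (xs(k := w)) i) z) $ j = poly p2 s"
        using Suc by force
      have "(A (\<lambda>i. if i < Suc k then x0 + s *\<^sub>R w else xs i) z) $ j = poly (p1 + [:0,1:] * p2) s" for s
      proof -
        define f where "f = (\<lambda>i. if i < k then x0 + s *\<^sub>R w else xs i)"
        have lk: "linear (\<lambda>t. A (f(k := t)) z)" using L Suc.prems by simp
        have e1: "(\<lambda>i. if i < Suc k then x0 + s *\<^sub>R w else xs i) = f(k := x0 + s *\<^sub>R w)"
          by (auto simp: f_def fun_eq_iff)
        have e2: "f(k := x0) = (\<lambda>i. if i < k then x0 + s *\<^sub>R w else (xs(k := x0)) i)"
          by (auto simp: f_def fun_eq_iff)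
        have e3: "f(k := w) = (\<lambda>i. if i < k then x0 + s *\<^sub>R w else (xs(k := w)) i)"
          by (auto simp: f_def fun_eq_iff)
        have "A (f(k := x0 + s *\<^sub>R w)) z = A (f(k := x0)) z + s *\<^sub>R A (f(k := w)) z"
          using linear_add[OF lk] linear_cmul[OF lk] by simp
        then show ?thesis using p1 p2 e1 e2 e3 by simp
      qed
      then show "\<exists>p. \<forall>s. (A (\<lambda>i. if i < Suc k then x0 + s *\<^sub>R w else xs i) z) $ j = poly p s" by blast
    qed
  qed
  from spec[OF this[OF le_refl], of "\<lambda>_. x0"] obtain p where p: "\<forall>s. (A (\<lambda>i. if i < n then x0 + s *\<^sub>R w else x0) z) $ j = poly p s"
    by blast
  have "A (\<lambda>_. x0 + s *\<^sub>R w) z = A (\<lambda>i. if i < n then x0 + s *\<^sub>R w else x0) z" for s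
    by (rule E) simp
  then show ?thesis using p by metis
qed

context rackctx begin

definition Ac where "Ac = (SOME A. (\<forall>n\<ge>1. sym_multilin_map n (A n)) \<and> (\<forall>x y. (\<lambda>n. A (Suc n) (\<lambda>_. x) y) sums (rk x y - y)))"

lemma Ac_ex: "(\<forall>n\<ge>1. sym_multilin_map n (Ac n)) \<and> (\<forall>x y. (\<lambda>n. Ac (Suc n) (\<lambda>_. x) y) sums (rk x y - y))"
proof -
  have "\<exists>A. (\<forall>n\<ge>1. sym_multilin_map n (A n)) \<and> (\<forall>x y. (\<lambda>n. A (Suc n) (\<lambda>_. x) y) sums (rk x y - y))"
    using an unfolding analytic_linear_lie_rack_def by blast
  then show ?thesis unfolding Ac_def by (rule someI_ex)
qed

lemma Ac_ml: "n \<ge> 1 \<Longrightarrow> sym_multilin_map n (Ac n)" using Ac_ex by blast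

definition P where "P n x z = (if n = 0 then z else Ac n (\<lambda>_. x) z)"

lemma P_sums: "(\<lambda>n. P n x z) sums rk x z"
proof -
  have "(\<lambda>n. P (Suc n) x z) sums (rk x z - z)" using Ac_ex by (simp add: P_def)
  then show ?thesis by (subst (asm) sums_Suc_iff) (simp add: P_def)
qed

lemma P_hom: "P n (t *\<^sub>R x) z = t^n *\<^sub>R P n x z"
  using multi_hom[OF Ac_ml] by (simp add: P_def)

lemma P_series: "(\<lambda>n. t^n *\<^sub>R P n x z) sums rk (t *\<^sub>R x) z"
  using P_sums[of "t *\<^sub>R x" z] by (simp add: P_hom)

lemma P_lin: "linear (P n x)"
proof (cases "n = 0")
  case True
  have "P n x = id" by (rule ext) (simp add: P_def True)
  then show ?thesis by (simp add: linear_id)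
next
  case False
  then have "sym_multilin_map n (Ac n)" by (intro Ac_ml) simp
  then have "linear (Ac n (\<lambda>_. x))" unfolding sym_multilin_map_def by blast
  moreover have "P n x = Ac n (\<lambda>_. x)" by (rule ext) (simp add: P_def False)
  ultimately show ?thesis by simp
qed

lemma P_equiv:
  assumes lg: "linear g" and eq: "\<And>x z. rk (g x) (g z) = g (rk x z)"
  shows "P n (g x) (g z) = g (P n x z)"
proof -
  have bl: "bounded_linear g" using lg lin_bl by blast
  have "(\<lambda>n. P n (g x) (g z)) = (\<lambda>n. g (P n x z))"
  proof (rule powser_unique_vec[where f = "\<lambda>t. rk (t *\<^sub>R g x) (g z)"])
    show "(\<lambda>n. t^n *\<^sub>R P n (g x) (g z)) sums rk (t *\<^sub>R g x) (g z)" for t by (rule P_series)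
    show "(\<lambda>n. t^n *\<^sub>R g (P n x z)) sums rk (t *\<^sub>R g x) (g z)" for t
    proof -
      have "(\<lambda>n. g (t^n *\<^sub>R P n x z)) sums g (rk (t *\<^sub>R x) z)"
        by (rule bounded_linear.sums[OF bl P_series])
      then show ?thesis using eq[of "t *\<^sub>R x" z] lg by (simp add: linear_cmul)
    qed
  qed
  then show ?thesis by metis
qed

lemma P0: "P 0 x z = z" by (simp add: P_def)

lemma P1: "P 1 x z = br x z"
proof -
  have "P 1 x z $ j = br x z $ j" for j
  proof -
    define c where "c n = P n x z $ j" for n
    have cs: "(\<lambda>n. c n * t^n) sums (rk (t *\<^sub>R x) z $ j)" for t
      using sums_vec_nth[OF P_series[of t x z], of j] by (simp add: c_def mult.commute)
    have sm: "summable (\<lambda>n. c n * 1^n)" using cs[of 1] by (auto simp: sums_iff)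
    have fe: "(\<lambda>t. \<Sum>n. c n * t^n) = (\<lambda>t. rk (t *\<^sub>R x) z $ j)"
      using cs by (auto simp: sums_iff)
    have "DERIV (\<lambda>t. \<Sum>n. c n * t^n) 0 :> (\<Sum>n. diffs c n * 0^n)"
      by (rule termdiffs_strong[OF sm]) simp
    then have d1: "DERIV (\<lambda>t. rk (t *\<^sub>R x) z $ j) 0 :> c 1" using fe by (simp add: diffs_def)
    have d2: "DERIV (\<lambda>t. rk (t *\<^sub>R x) z $ j) 0 :> br x z $ j"
      by (rule comp_deriv[OF drk])
    show ?thesis using DERIV_unique[OF d1 d2] by (simp add: c_def)
  qed
  then show ?thesis by (simp add: vec_eq_iff)
qed

lemma P_neg: "P n (- x) z = (-1)^n *\<^sub>R P n x z"
  using P_hom[of n "-1" x z] by simp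

lemma P_poly: "\<exists>p. \<forall>s. P n (x0 + s *\<^sub>R w) z $ j = poly p s"
proof (cases "n = 0")
  case True then show ?thesis by (auto simp: P_def intro!: exI[of _ "[:_:]"])
next
  case False
  then have "sym_multilin_map n (Ac n)" by (intro Ac_ml) simp
  from multi_poly[OF this] False show ?thesis by (simp add: P_def)
qed

end


definition pser :: "(nat \<Rightarrow> real) \<Rightarrow> 'a::{real_normed_field,banach} \<Rightarrow> 'a" where
  "pser a w = (\<Sum>n. of_real (a n) * w^n)"

definition entire_coeffs :: "(nat \<Rightarrow> real) \<Rightarrow> bool" where
  "entire_coeffs a \<longleftrightarrow> (\<forall>s::real. summable (\<lambda>n. a n * s^n))"

lemma pser_summable:
  assumes "entire_coeffs a"
  shows "summable (\<lambda>n. of_real (a n) * (w::'a::{real_normed_field,banach})^n)"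
proof -
  have s1: "summable (\<lambda>n. a n * (norm w + 1)^n)" using assms unfolding entire_coeffs_def by blast
  have "summable (\<lambda>n. norm (a n * (norm w)^n))"
    by (rule powser_insidea[OF s1]) simp
  then have "summable (\<lambda>n. norm (of_real (a n) * w^n :: 'a))"
    by (simp add: norm_mult norm_power abs_mult)
  then show ?thesis by (rule summable_norm_cancel)
qed

lemma pser_sums: "entire_coeffs a \<Longrightarrow> (\<lambda>n. of_real (a n) * w^n) sums pser a w"
  unfolding pser_def using pser_summable by (blast intro: summable_sums)

lemma pser_real_eq: "pser a (s::real) = (\<Sum>n. a n * s^n)"
  by (simp add: pser_def)

lemma pser_real: "entire_coeffs a \<Longrightarrow> pser a (of_real s :: 'a::{real_normed_field,banach}) = of_real (pser a s)"
proof -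
  assume A: "entire_coeffs a"
  have "(\<lambda>n. of_real (a n * s^n) :: 'a) sums of_real (pser a s)"
    using sums_of_real[OF pser_sums[OF A, of s]] by simp
  then have "(\<lambda>n. of_real (a n) * (of_real s)^n :: 'a) sums of_real (pser a s)"
    by (simp add: of_real_mult of_real_power)
  then show ?thesis using pser_sums[OF A, of "of_real s"] sums_unique2 by blast
qed

lemma pser_DERIV: "entire_coeffs a \<Longrightarrow> \<exists>d. DERIV (pser a) w :> d"
proof -
  assume A: "entire_coeffs a"
  have "DERIV (\<lambda>x. \<Sum>n. of_real (a n) * x^n) w :> (\<Sum>n. diffs (\<lambda>n. of_real (a n)) n * w^n)"
    by (rule termdiffs_strong[OF pser_summable[OF A, of "of_real (norm w + 1)"]]) simp
  then show ?thesis unfolding pser_def[abs_def] by blast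
qed

lemma pser_hol: "entire_coeffs a \<Longrightarrow> (pser a :: complex \<Rightarrow> complex) holomorphic_on UNIV"
  unfolding holomorphic_on_def field_differentiable_def
proof
  fix x :: complex
  assume A: "entire_coeffs a"
  obtain d where "DERIV (pser a) x :> d" using pser_DERIV[OF A] by blast
  then show "\<exists>f'. (pser a has_field_derivative f') (at x within UNIV)" by auto
qed

lemma pser_isCont: "entire_coeffs a \<Longrightarrow> isCont (pser a :: 'a::{real_normed_field,banach} \<Rightarrow> 'a) w"
proof -
  assume A: "entire_coeffs a"
  obtain d where "DERIV (pser a) w :> d" using pser_DERIV[OF A] by blast
  then show ?thesis by (rule DERIV_isCont)
qed

lemma pser_0: "pser a 0 = of_real (a 0)"
  unfolding pser_def by simp

lemma pser_cnj: "entire_coeffs a \<Longrightarrow> pser a (cnj w) = cnj (pser a (w::complex))"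
proof -
  assume A: "entire_coeffs a"
  have 1: "(\<lambda>n. cnj (complex_of_real (a n) * w^n)) sums cnj (pser a w)"
    by (rule sums_cnj[THEN iffD2, OF pser_sums[OF A]])
  have eq: "\<And>n. cnj (complex_of_real (a n) * w^n) = complex_of_real (a n) * (cnj w)^n"
    by (simp only: complex_cnj_mult complex_cnj_power complex_cnj_complex_of_real)
  have "(\<lambda>n. complex_of_real (a n) * (cnj w)^n) sums cnj (pser a w)"
    using 1 unfolding eq .
  then show ?thesis using pser_sums[OF A, of "cnj w"] sums_unique2 by blast
qed

lemma reindex_even:
  fixes a :: "nat \<Rightarrow> 'a::real_normed_vector"
  assumes "(\<lambda>n. if even n then a n else 0) sums X"
  shows "(\<lambda>m. a (2*m)) sums X"
proof -
  have sm: "strict_mono (\<lambda>m::nat. 2*m)" by (auto simp: strict_mono_def)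
  have z: "\<And>n. n \<notin> range (\<lambda>m::nat. 2*m) \<Longrightarrow> (if even n then a n else 0) = 0"
    by (auto elim!: evenE)
  have "(\<lambda>m. (\<lambda>n. if even n then a n else 0) (2*m)) sums X"
    by (rule sums_mono_reindex[OF sm, of "\<lambda>n. if even n then a n else 0" X, THEN iffD2, OF z assms])
  then show ?thesis by simp
qed

lemma reindex_odd:
  fixes a :: "nat \<Rightarrow> 'a::real_normed_vector"
  assumes "(\<lambda>n. if odd n then a n else 0) sums X"
  shows "(\<lambda>m. a (2*m+1)) sums X"
proof -
  have sm: "strict_mono (\<lambda>m::nat. 2*m+1)" by (auto simp: strict_mono_def)
  have z: "\<And>n. n \<notin> range (\<lambda>m::nat. 2*m+1) \<Longrightarrow> (if odd n then a n else 0) = 0"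
    by (auto elim!: oddE)
  have "(\<lambda>m. (\<lambda>n. if odd n then a n else 0) (2*m+1)) sums X"
    by (rule sums_mono_reindex[OF sm, of "\<lambda>n. if odd n then a n else 0" X, THEN iffD2, OF z assms])
  then show ?thesis by simp
qed

lemma evenodd_sums:
  fixes a :: "nat \<Rightarrow> 'a::real_normed_vector"
  assumes A: "a sums SA" and B: "(\<lambda>n. (-1::real)^n *\<^sub>R a n) sums SB"
  shows "(\<lambda>m. a (2*m)) sums ((1/2) *\<^sub>R (SA + SB))" "(\<lambda>m. a (2*m+1)) sums ((1/2) *\<^sub>R (SA - SB))"
proof -
  have "(\<lambda>n. (1/2::real) *\<^sub>R (a n + (-1::real)^n *\<^sub>R a n)) sums ((1/2) *\<^sub>R (SA + SB))"
    by (intro sums_scaleR_right sums_add A B)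
  moreover have "(\<lambda>n. (1/2::real) *\<^sub>R (a n + (-1::real)^n *\<^sub>R a n)) = (\<lambda>n. if even n then a n else 0)"
  proof
    fix n show "(1/2::real) *\<^sub>R (a n + (-1::real)^n *\<^sub>R a n) = (if even n then a n else 0)"
      by (cases "even n") simp_all
  qed
  ultimately show "(\<lambda>m. a (2*m)) sums ((1/2) *\<^sub>R (SA + SB))"
    by (intro reindex_even) simp
  have "(\<lambda>n. (1/2::real) *\<^sub>R (a n - (-1::real)^n *\<^sub>R a n)) sums ((1/2) *\<^sub>R (SA - SB))"
    by (intro sums_scaleR_right sums_diff A B)
  moreover have "(\<lambda>n. (1/2::real) *\<^sub>R (a n - (-1::real)^n *\<^sub>R a n)) = (\<lambda>n. if odd n then a n else 0)"
  proof
    fix n show "(1/2::real) *\<^sub>R (a n - (-1::real)^n *\<^sub>R a n) = (if odd n then a n else 0)"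
      by (cases "even n") (simp_all add: scaleR_2[symmetric] del: scaleR_half_double)
  qed
  ultimately show "(\<lambda>m. a (2*m+1)) sums ((1/2) *\<^sub>R (SA - SB))"
    by (intro reindex_odd) simp
qed

definition phic :: "nat \<Rightarrow> real" where "phic m = 1 / fact (2*m+1)"
definition psic :: "nat \<Rightarrow> real" where "psic m = 1 / fact (2*m+2)"

lemma entire_fact:
  assumes "\<And>m. \<bar>c m\<bar> \<le> 1 / fact m"
  shows "entire_coeffs c"
  unfolding entire_coeffs_def
proof
  fix s :: real
  have "summable (\<lambda>m. \<bar>s\<bar>^m /\<^sub>R fact m)" using exp_converges[of "\<bar>s\<bar>"] by (simp add: sums_iff)
  moreover have "norm (c m * s^m) \<le> \<bar>s\<bar>^m /\<^sub>R fact m" for m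
  proof -
    have "\<bar>c m\<bar> * \<bar>s\<bar>^m \<le> (1 / fact m) * \<bar>s\<bar>^m"
      by (rule mult_right_mono[OF assms]) simp
    moreover have "norm (c m * s^m) = \<bar>c m\<bar> * \<bar>s\<bar>^m" by (simp add: abs_mult power_abs)
    moreover have "\<bar>s\<bar>^m /\<^sub>R fact m = (1 / fact m) * \<bar>s\<bar>^m" by (simp add: field_simps)
    ultimately show ?thesis by metis
  qed
  ultimately show "summable (\<lambda>m. c m * s^m)"
    using summable_comparison_test[of "\<lambda>m. c m * s^m" "\<lambda>m. \<bar>s\<bar>^m /\<^sub>R fact m"] by blast
qed

lemma inv_fact_le:
  assumes "m \<le> k" shows "\<bar>1 / (fact k :: real)\<bar> \<le> 1 / fact m"
proof -
  have "(fact m :: real) \<le> fact k" using assms by (rule fact_mono)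
  moreover have "(0::real) < fact m" by simp
  ultimately show ?thesis by (simp add: divide_left_mono)
qed

lemma entire_phic: "entire_coeffs phic"
  by (rule entire_fact) (unfold phic_def, rule inv_fact_le, simp)

lemma entire_psic: "entire_coeffs psic"
  by (rule entire_fact) (unfold psic_def, rule inv_fact_le, simp)


lemma hol_comp:
  "f holomorphic_on UNIV \<Longrightarrow> g holomorphic_on UNIV \<Longrightarrow> (\<lambda>z. f (g z)) holomorphic_on UNIV"
  using holomorphic_on_compose_gen[of g UNIV f UNIV] by (simp add: o_def)

lemma exp_eq1_zero:
  fixes f :: "complex \<Rightarrow> complex"
  assumes cf: "continuous_on UNIV f" and f0: "f 0 = 0" and ef: "\<And>z. exp (f z) = 1"
  shows "f z = 0"
proof -
  have "f constant_on UNIV"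
  proof (rule continuous_discrete_range_constant[OF connected_UNIV cf])
    fix x :: complex
    show "\<exists>e>0. \<forall>y. y \<in> UNIV \<and> f y \<noteq> f x \<longrightarrow> e \<le> norm (f y - f x)"
    proof (intro exI[of _ "2*pi"] conjI allI impI)
      show "0 < 2*pi" by simp
      fix y assume yy: "y \<in> UNIV \<and> f y \<noteq> f x"
      have "exp (f y - f x) = 1" using ef[of y] ef[of x] by (simp add: exp_diff)
      then obtain n :: int where n1: "Re (f y - f x) = 0" and n2: "Im (f y - f x) = of_int (2*n) * pi"
        unfolding exp_eq_1 by blast
      have "n \<noteq> 0"
      proof
        assume "n = 0"
        then have "f y - f x = 0" using n1 n2 by (simp add: complex_eq_iff)
        then show False using yy by simp
      qed
      then have "1 \<le> \<bar>real_of_int n\<bar>" by linarith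
      then have "2*pi \<le> \<bar>Im (f y - f x)\<bar>" using n2 pi_gt_zero
        by (simp add: abs_mult)
      also have "\<dots> \<le> norm (f y - f x)" by (rule abs_Im_le_cmod)
      finally show "2*pi \<le> norm (f y - f x)" .
    qed
  qed
  then obtain c where "\<And>x. f x = c" unfolding constant_on_def by blast
  then show ?thesis using f0 by metis
qed

lemma cont_zero_at0:
  fixes f :: "complex \<Rightarrow> complex"
  assumes "isCont f 0" and "\<And>w. w \<noteq> 0 \<Longrightarrow> f w = 0"
  shows "f 0 = 0"
proof -
  have l1: "f \<midarrow>0\<rightarrow> f 0" using assms(1) by (simp add: isCont_def)
  have "\<forall>\<^sub>F w in at 0. f w = 0"
    unfolding eventually_at_filter by (rule always_eventually) (simp add: assms(2))
  then have l2: "f \<midarrow>0\<rightarrow> 0" by (simp add: tendsto_eventually)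
  show ?thesis using LIM_unique[OF l1 l2] .
qed

lemma sinh_phi:
  fixes t :: complex
  shows "sinh t = t * pser phic (t^2)"
proof -
  have "(\<lambda>n. if odd n then t ^ n /\<^sub>R fact n else 0) = (\<lambda>n. if even n then 0 else t ^ n /\<^sub>R fact n)"
    by (rule ext) simp
  then have "(\<lambda>n. if odd n then t ^ n /\<^sub>R fact n else 0) sums sinh t"
    using sinh_converges[of t] by simp
  then have "(\<lambda>m. t^(2*m+1) /\<^sub>R fact (2*m+1)) sums sinh t"
    by (rule reindex_odd)
  moreover have "(\<lambda>m. t^(2*m+1) /\<^sub>R fact (2*m+1)) = (\<lambda>m. t * (of_real (phic m) * (t^2)^m))"
  proof
    fix m
    have e1: "t^(2*m+1) = t * (t^2)^m" by (simp add: power_mult[symmetric] power_add mult.commute)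
    show "t^(2*m+1) /\<^sub>R fact (2*m+1) = t * (of_real (phic m) * (t^2)^m)"
      unfolding e1 phic_def by (simp add: scaleR_conv_of_real divide_inverse mult_ac)
  qed
  ultimately have "(\<lambda>m. t * (of_real (phic m) * (t^2)^m)) sums sinh t" by simp
  moreover have "(\<lambda>m. t * (of_real (phic m) * (t^2)^m)) sums (t * pser phic (t^2))"
    by (intro sums_mult pser_sums entire_phic)
  ultimately show ?thesis using sums_unique2 by blast
qed

lemma cosh_psi:
  fixes t :: complex
  shows "cosh t - 1 = t^2 * pser psic (t^2)"
proof -
  have "(\<lambda>n. if even n then t ^ n /\<^sub>R fact n else 0) sums cosh t"
    by (rule cosh_converges)
  then have "(\<lambda>m. t^(2*m) /\<^sub>R fact (2*m)) sums cosh t"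
    by (rule reindex_even)
  then have "(\<lambda>m. t^(2*(Suc m)) /\<^sub>R fact (2*(Suc m))) sums (cosh t - 1)"
    by (subst sums_Suc_iff) simp
  moreover have "(\<lambda>m. t^(2*(Suc m)) /\<^sub>R fact (2*(Suc m))) = (\<lambda>m. t^2 * (of_real (psic m) * (t^2)^m))"
  proof
    fix m
    have k: "2 * Suc m = 2*m+2" by simp
    have e0: "(t^2)^m = t^(2*m)" by (rule power_mult[symmetric])
    have e1: "t^(2*m+2) = t^2 * (t^2)^m" unfolding e0 power_add by (rule mult.commute)
    show "t^(2*(Suc m)) /\<^sub>R fact (2*(Suc m)) = t^2 * (of_real (psic m) * (t^2)^m)"
      unfolding k e1 psic_def by (simp add: scaleR_conv_of_real divide_inverse mult_ac)
  qed
  ultimately have "(\<lambda>m. t^2 * (of_real (psic m) * (t^2)^m)) sums (cosh t - 1)" by simp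
  moreover have "(\<lambda>m. t^2 * (of_real (psic m) * (t^2)^m)) sums (t^2 * pser psic (t^2))"
    by (intro sums_mult pser_sums entire_psic)
  ultimately show ?thesis using sums_unique2 by blast
qed


lemma ring_id: "(1 + z*b + z^2*c) * (1 - z*b + z^2*c) - 1 = z^2 * (2*c + z^2*c^2 - b^2)" for z b c :: complex
  by algebra

theorem main_F:
  fixes \<beta> \<gamma> :: "nat \<Rightarrow> real" and \<sigma> :: real
  assumes eb: "entire_coeffs \<beta>" and ec: "entire_coeffs \<gamma>" and b0: "\<beta> 0 = 1"
    and \<sigma>: "\<sigma> = 1 \<or> \<sigma> = -1"
    and rel: "\<And>s::real. s > 0 \<Longrightarrow> 2 * pser \<gamma> (\<sigma> * s) + (\<sigma> * s) * (pser \<gamma> (\<sigma> * s))^2 = (pser \<beta> (\<sigma> * s))^2"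
  shows "\<exists>F. real_analytic F \<and> F 0 = 1 \<and> (\<forall>s. F s * pser phic ((F s)^2 * s) = pser \<beta> s \<and> (F s)^2 * pser psic ((F s)^2 * s) = pser \<gamma> s)"
proof -
  define bC :: "complex \<Rightarrow> complex" where "bC = pser \<beta>"
  define cC :: "complex \<Rightarrow> complex" where "cC = pser \<gamma>"
  have hb: "bC holomorphic_on UNIV" unfolding bC_def by (rule pser_hol[OF eb])
  have hc: "cC holomorphic_on UNIV" unfolding cC_def by (rule pser_hol[OF ec])
  have relC: "2 * cC w + w * (cC w)^2 = (bC w)^2" for w
  proof -
    define h where "h w = 2 * cC w + w * (cC w)^2 - (bC w)^2" for w
    have hh: "h holomorphic_on UNIV" unfolding h_def using hb hc by (intro holomorphic_intros) auto
    define U where "U = (\<lambda>s. complex_of_real (\<sigma> * s)) ` {0<..}"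
    have lim: "complex_of_real \<sigma> islimpt U"
      unfolding islimpt_approachable
    proof (intro allI impI)
      fix e :: real assume e: "e > 0"
      have d: "dist (complex_of_real (\<sigma>*(1+e/2))) (complex_of_real \<sigma>) = \<bar>\<sigma>*(1+e/2) - \<sigma>\<bar>"
        by (metis dist_norm norm_of_real of_real_diff)
      show "\<exists>x'\<in>U. x' \<noteq> complex_of_real \<sigma> \<and> dist x' (complex_of_real \<sigma>) < e"
      proof (intro bexI conjI)
        show "complex_of_real (\<sigma>*(1+e/2)) \<in> U" unfolding U_def using e by (intro imageI) simp
        show "complex_of_real (\<sigma>*(1+e/2)) \<noteq> complex_of_real \<sigma>" using \<sigma> e by auto
        show "dist (complex_of_real (\<sigma>*(1+e/2))) (complex_of_real \<sigma>) < e" unfolding d using \<sigma> e by auto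
      qed
    qed
    have hU: "h z = 0" if "z \<in> U" for z
    proof -
      from that obtain s where s: "s > 0" "z = complex_of_real (\<sigma> * s)" unfolding U_def by auto
      have "h z = complex_of_real (2 * pser \<gamma> (\<sigma> * s) + (\<sigma> * s) * (pser \<gamma> (\<sigma> * s))^2 - (pser \<beta> (\<sigma> * s))^2)"
        unfolding h_def bC_def cC_def s(2) pser_real[OF eb] pser_real[OF ec] by simp
      then show ?thesis using rel[OF s(1)] by simp
    qed
    have "h w = 0"
      by (rule analytic_continuation[OF hh open_UNIV connected_UNIV subset_UNIV UNIV_I lim hU UNIV_I])
    then show ?thesis by (simp add: h_def)
  qed
  define e where "e z = 1 + z * bC (z^2) + z^2 * cC (z^2)" for z
  have hb2: "(\<lambda>z. bC (z^2)) holomorphic_on UNIV" by (rule hol_comp[OF hb]) (intro holomorphic_intros)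
  have hc2: "(\<lambda>z. cC (z^2)) holomorphic_on UNIV" by (rule hol_comp[OF hc]) (intro holomorphic_intros)
  have he: "e holomorphic_on UNIV" unfolding e_def[abs_def] using hb2 hc2 by (intro holomorphic_intros) auto
  have emul: "e z * e (-z) = 1" for z
  proof -
    have "e (-z) = 1 - z * bC (z^2) + z^2 * cC (z^2)" by (simp add: e_def)
    then have "e z * e (-z) - 1 = z^2 * (2 * cC (z^2) + z^2 * (cC (z^2))^2 - (bC (z^2))^2)"
      unfolding e_def using ring_id by simp
    then show ?thesis using relC[of "z^2"] by simp
  qed
  have enz: "e z \<noteq> 0" for z using emul[of z] by auto
  obtain g where hg: "g holomorphic_on UNIV" and eg: "\<And>z. z \<in> UNIV \<Longrightarrow> e z = exp (g z)"
    using contractible_imp_holomorphic_log[OF he convex_imp_contractible[OF convex_UNIV]] enz by metis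
  define \<theta> where "\<theta> z = g z - g 0" for z
  have e0: "e 0 = 1" by (simp add: e_def)
  have e\<theta>: "exp (\<theta> z) = e z" for z
    using eg[of z] eg[of 0] e0 by (simp add: \<theta>_def exp_diff)
  have h\<theta>: "\<theta> holomorphic_on UNIV" unfolding \<theta>_def[abs_def] using hg by (intro holomorphic_intros) auto
  have c\<theta>: "continuous_on UNIV \<theta>" by (rule holomorphic_on_imp_continuous_on[OF h\<theta>])
  have \<theta>0: "\<theta> 0 = 0" by (simp add: \<theta>_def)
  have c\<theta>m: "continuous_on UNIV (\<lambda>z. \<theta> (-z))"
    by (rule continuous_on_compose2[OF c\<theta>]) (auto intro: continuous_intros)
  have \<theta>odd: "\<theta> (-z) = - \<theta> z" for z
  proof -
    have "\<theta> z + \<theta> (-z) = 0"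
    proof (rule exp_eq1_zero[of "\<lambda>z. \<theta> z + \<theta> (-z)"])
      show "continuous_on UNIV (\<lambda>z. \<theta> z + \<theta> (- z))" using c\<theta> c\<theta>m by (intro continuous_intros)
      show "\<theta> 0 + \<theta> (- 0) = 0" using \<theta>0 by simp
      show "exp (\<theta> z + \<theta> (- z)) = 1" for z using emul[of z] by (simp add: exp_add e\<theta>)
    qed
    then show ?thesis by (simp add: eq_neg_iff_add_eq_0 add.commute)
  qed
  have ecnj: "e (cnj z) = cnj (e z)" for z
    by (simp add: e_def bC_def cC_def pser_cnj[OF eb] pser_cnj[OF ec] flip: complex_cnj_power)
  have c\<theta>c: "continuous_on UNIV (\<lambda>z. cnj (\<theta> (cnj z)))"
    by (intro continuous_intros continuous_on_compose2[OF c\<theta>]) auto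
  have \<theta>cnj: "\<theta> (cnj z) = cnj (\<theta> z)" for z
  proof -
    have "cnj (\<theta> (cnj z)) - \<theta> z = 0"
    proof (rule exp_eq1_zero[of "\<lambda>z. cnj (\<theta> (cnj z)) - \<theta> z"])
      show "continuous_on UNIV (\<lambda>z. cnj (\<theta> (cnj z)) - \<theta> z)" by (rule continuous_on_diff[OF c\<theta>c c\<theta>])
      show "cnj (\<theta> (cnj 0)) - \<theta> 0 = 0" using \<theta>0 by simp
      show "exp (cnj (\<theta> (cnj z)) - \<theta> z) = 1" for z
      proof -
        have "exp (cnj (\<theta> (cnj z))) = e z" using e\<theta>[of "cnj z"] ecnj[of "cnj z"]
          by (metis complex_cnj_cnj exp_cnj)
        then show ?thesis using enz[of z] by (simp add: exp_diff e\<theta>)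
      qed
    qed
    then show ?thesis by (metis complex_cnj_cnj eq_iff_diff_eq_0)
  qed
  define a where "a n = (deriv ^^ n) \<theta> 0 / fact n" for n
  have \<theta>s: "(\<lambda>n. a n * z^n) sums \<theta> z" for z
  proof -
    have "\<theta> holomorphic_on ball 0 (norm z + 1)" using h\<theta> by (rule holomorphic_on_subset) simp
    from holomorphic_power_series[OF this, of z] show ?thesis by (simp add: a_def)
  qed
  have oddser: "(\<lambda>m. a (2*m+1) * z^(2*m+1)) sums \<theta> z" for z
  proof -
    have B: "(\<lambda>n. (-1::real)^n *\<^sub>R (a n * z^n)) sums \<theta> (-z)"
    proof -
      have eq: "(\<lambda>n. a n * (-z)^n) = (\<lambda>n. (-1::real)^n *\<^sub>R (a n * z^n))"
        by (rule ext) (simp add: power_minus[of z] scaleR_conv_of_real)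
      from \<theta>s[of "-z"] show ?thesis unfolding eq .
    qed
    have "(\<lambda>m. a (2*m+1) * z^(2*m+1)) sums ((1/2) *\<^sub>R (\<theta> z - \<theta> (-z)))"
      by (rule evenodd_sums(2)[OF \<theta>s B])
    moreover have "(1/2::real) *\<^sub>R (\<theta> z - \<theta> (-z)) = \<theta> z"
      using \<theta>odd[of z] by (simp add: scaleR_conv_of_real)
    ultimately show ?thesis by simp
  qed
  have Gser: "(\<lambda>m. a (2*m+1) * (z^2)^m) sums (\<theta> z / z)" if z: "z \<noteq> 0" for z
  proof -
    have "(\<lambda>m. inverse z * (a (2*m+1) * z^(2*m+1))) sums (inverse z * \<theta> z)"
      by (rule sums_mult[OF oddser])
    moreover have "(\<lambda>m. inverse z * (a (2*m+1) * z^(2*m+1))) = (\<lambda>m. a (2*m+1) * (z^2)^m)"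
    proof
      fix m
      have "z^(2*m+1) = z * (z^2)^m" by (simp add: power_mult[symmetric] power_add mult.commute)
      then show "inverse z * (a (2*m+1) * z^(2*m+1)) = a (2*m+1) * (z^2)^m" using z by (simp add: field_simps)
    qed
    ultimately show ?thesis by (simp add: divide_inverse mult.commute)
  qed
  define G where "G w = (\<Sum>m. a (2*m+1) * w^m)" for w
  have Gsum: "summable (\<lambda>m. a (2*m+1) * w^m)" for w
  proof (cases "w = 0")
    case True then show ?thesis using powser_sums_zero[of "\<lambda>m. a (2*m+1)"] by (simp add: sums_iff)
  next
    case False
    then have "csqrt w \<noteq> 0" by simp
    from Gser[OF this] show ?thesis by (simp add: sums_iff)
  qed
  have Gsq: "G (z^2) * z = \<theta> z" for z
  proof (cases "z = 0")
    case True then show ?thesis using \<theta>0 by simp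
  next
    case False
    have "G (z^2) = \<theta> z / z" unfolding G_def using Gser[OF False] by (simp add: sums_iff)
    then show ?thesis using False by simp
  qed
  have dG: "\<exists>d. DERIV G w :> d" for w
  proof -
    have "DERIV (\<lambda>x. \<Sum>n. a (2*n+1) * x^n) w :> (\<Sum>n. diffs (\<lambda>m. a (2*m+1)) n * w^n)"
      by (rule termdiffs_strong[OF Gsum[of "of_real (norm w + 1)"]]) simp
    then show ?thesis unfolding G_def[abs_def] by blast
  qed
  have hG: "G holomorphic_on UNIV"
    unfolding holomorphic_on_def field_differentiable_def
  proof
    fix x :: complex
    obtain d where "DERIV G x :> d" using dG by blast
    then show "\<exists>f'. (G has_field_derivative f') (at x within UNIV)" by auto
  qed
  have cG: "isCont G w" for w
  proof -
    obtain d where "DERIV G w :> d" using dG by blast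
    then show ?thesis by (rule DERIV_isCont)
  qed
  have idnz: "G w * pser phic ((G w)^2 * w) = bC w \<and> (G w)^2 * pser psic ((G w)^2 * w) = cC w"
    if w: "w \<noteq> 0" for w
  proof -
    define z where "z = csqrt w"
    have z0: "z \<noteq> 0" using w by (simp add: z_def)
    have zw: "z^2 = w" by (simp add: z_def)
    define t where "t = \<theta> z"
    have tG: "t = G w * z" using Gsq[of z] by (simp add: t_def zw)
    have et: "exp t = e z" by (simp add: t_def e\<theta>)
    have emt: "exp (-t) = e (-z)" by (simp add: t_def e\<theta> flip: \<theta>odd)
    have ez: "e z = 1 + z * bC w + w * cC w" by (simp add: e_def zw)
    have emz: "e (-z) = 1 - z * bC w + w * cC w" by (simp add: e_def zw)
    have "sinh t = z * bC w"
      unfolding sinh_def et emt ez emz by (simp add: scaleR_conv_of_real field_simps)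
    moreover have "sinh t = z * (G w * pser phic ((G w)^2 * w))"
      unfolding sinh_phi tG by (simp add: power_mult_distrib zw mult_ac)
    ultimately have 1: "G w * pser phic ((G w)^2 * w) = bC w" using z0 by simp
    have "cosh t - 1 = w * cC w"
      unfolding cosh_def et emt ez emz by (simp add: scaleR_conv_of_real field_simps)
    moreover have "cosh t - 1 = w * ((G w)^2 * pser psic ((G w)^2 * w))"
      unfolding cosh_psi tG by (simp add: power_mult_distrib zw mult_ac)
    ultimately have 2: "(G w)^2 * pser psic ((G w)^2 * w) = cC w" using w by simp
    show ?thesis using 1 2 by blast
  qed
  have cb: "isCont bC w" for w unfolding bC_def by (rule pser_isCont[OF eb])
  have cc: "isCont cC w" for w unfolding cC_def by (rule pser_isCont[OF ec])
  have id1: "G w * pser phic ((G w)^2 * w) = bC w" for w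
  proof (cases "w = 0")
    case False then show ?thesis using idnz by blast
  next
    case True
    have c1: "isCont (\<lambda>w. G w * pser phic ((G w)^2 * w) - bC w) 0"
      by (intro continuous_intros cG cb isCont_o2[OF _ pser_isCont[OF entire_phic]])
    have "G 0 * pser phic ((G 0)^2 * 0) - bC 0 = 0"
      by (rule cont_zero_at0[OF c1]) (use idnz in auto)
    then show ?thesis using True by simp
  qed
  have id2: "(G w)^2 * pser psic ((G w)^2 * w) = cC w" for w
  proof (cases "w = 0")
    case False then show ?thesis using idnz by blast
  next
    case True
    have c1: "isCont (\<lambda>w. (G w)^2 * pser psic ((G w)^2 * w) - cC w) 0"
      by (intro continuous_intros cG cc isCont_o2[OF _ pser_isCont[OF entire_psic]])
    have "(G 0)^2 * pser psic ((G 0)^2 * 0) - cC 0 = 0"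
      by (rule cont_zero_at0[OF c1]) (use idnz in auto)
    then show ?thesis using True by simp
  qed
  have G0: "G 0 = 1"
    using id1[of 0] by (simp add: bC_def pser_0 b0 phic_def)
  have Greal: "Im (G (complex_of_real s)) = 0" for s
  proof -
    consider "s > 0" | "s < 0" | "s = 0" by linarith
    then show ?thesis
    proof cases
      case 1
      define r where "r = sqrt s"
      define z where "z = complex_of_real r"
      have zs: "z^2 = complex_of_real s" using 1 by (simp add: z_def r_def flip: of_real_power)
      have "\<theta> z = cnj (\<theta> z)" using \<theta>cnj[of z] by (simp add: z_def)
      then have "Im (\<theta> z) = Im (cnj (\<theta> z))" by simp
      then have I: "Im (\<theta> z) = 0" by simp
      have "G (complex_of_real s) * z = \<theta> z" using Gsq[of z] zs by simp
      moreover have "z \<noteq> 0" using 1 by (simp add: z_def r_def)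
      ultimately have "G (complex_of_real s) = \<theta> z / complex_of_real r" by (simp add: field_simps z_def)
      then show ?thesis using I by simp
    next
      case 2
      define r where "r = sqrt (-s)"
      define z where "z = \<i> * complex_of_real r"
      have r0: "r > 0" using 2 by (simp add: r_def)
      have zs: "z^2 = complex_of_real s" using 2
        by (simp add: z_def r_def power_mult_distrib flip: of_real_power)
      have "cnj z = - z" by (simp add: z_def)
      then have "\<theta> (- z) = cnj (\<theta> z)" using \<theta>cnj[of z] by simp
      then have "cnj (\<theta> z) = - \<theta> z" using \<theta>odd[of z] by simp
      then have "Re (cnj (\<theta> z)) = Re (- \<theta> z)" by simp
      then have R: "Re (\<theta> z) = 0" by simp
      have tz: "\<theta> z = \<i> * complex_of_real (Im (\<theta> z))" using R by (simp add: complex_eq_iff)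
      have "G (complex_of_real s) * z = \<theta> z" using Gsq[of z] zs by simp
      moreover have "z \<noteq> 0" using r0 by (simp add: z_def)
      ultimately have "G (complex_of_real s) = \<theta> z / z" by (simp add: field_simps)
      also have "\<dots> = complex_of_real (Im (\<theta> z) / r)"
        using r0 by (subst tz) (simp add: z_def field_simps)
      finally show ?thesis by simp
    next
      case 3 show ?thesis using G0 3 by simp
    qed
  qed
  define F where "F s = Re (G (complex_of_real s))" for s
  have GF: "G (complex_of_real s) = complex_of_real (F s)" for s
    by (simp add: F_def complex_eq_iff Greal)
  have F0: "F 0 = 1" using G0 by (simp add: F_def)
  have idF: "F s * pser phic ((F s)^2 * s) = pser \<beta> s \<and> (F s)^2 * pser psic ((F s)^2 * s) = pser \<gamma> s" for s
  proof -
    have p1: "pser phic ((complex_of_real (F s))^2 * complex_of_real s) = complex_of_real (pser phic ((F s)^2 * s))"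
      by (simp only: of_real_mult[symmetric] of_real_power[symmetric] pser_real[OF entire_phic])
    have p2: "pser psic ((complex_of_real (F s))^2 * complex_of_real s) = complex_of_real (pser psic ((F s)^2 * s))"
      by (simp only: of_real_mult[symmetric] of_real_power[symmetric] pser_real[OF entire_psic])
    have "complex_of_real (F s * pser phic ((F s)^2 * s)) = complex_of_real (pser \<beta> s)"
      using id1[of "complex_of_real s"] unfolding GF p1 bC_def pser_real[OF eb] by simp
    moreover have "complex_of_real ((F s)^2 * pser psic ((F s)^2 * s)) = complex_of_real (pser \<gamma> s)"
      using id2[of "complex_of_real s"] unfolding GF p2 cC_def pser_real[OF ec] by simp
    ultimately show ?thesis by (simp only: of_real_eq_iff)
  qed
  have RA: "real_analytic F"
    unfolding real_analytic_def
  proof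
    fix x0 :: real
    define c where "c k = Re ((deriv ^^ k) G (complex_of_real x0) / fact k)" for k
    have "\<forall>x. \<bar>x - x0\<bar> < 1 \<longrightarrow> (\<lambda>k. c k * (x - x0) ^ k) sums F x"
    proof (intro allI impI)
      fix x :: real assume x: "\<bar>x - x0\<bar> < 1"
      have hb1: "G holomorphic_on ball (complex_of_real x0) 1" by (rule holomorphic_on_subset[OF hG]) simp
      have xb: "complex_of_real x \<in> ball (complex_of_real x0) 1"
        using x by (simp add: dist_norm abs_minus_commute flip: of_real_diff)
      have "(\<lambda>k. (deriv ^^ k) G (complex_of_real x0) / fact k * (complex_of_real x - complex_of_real x0)^k) sums G (complex_of_real x)"
        by (rule holomorphic_power_series[OF hb1 xb])
      then have "(\<lambda>k. Re ((deriv ^^ k) G (complex_of_real x0) / fact k * (complex_of_real x - complex_of_real x0)^k)) sums Re (G (complex_of_real x))"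
        by (rule sums_Re)
      moreover have "(\<lambda>k. Re ((deriv ^^ k) G (complex_of_real x0) / fact k * (complex_of_real x - complex_of_real x0)^k)) = (\<lambda>k. c k * (x - x0) ^ k)"
      proof
        fix k
        have e: "(complex_of_real x - complex_of_real x0)^k = complex_of_real ((x - x0)^k)" by simp
        have rw: "\<And>w r. Re (w * complex_of_real r) = Re w * r" by simp
        show "Re ((deriv ^^ k) G (complex_of_real x0) / fact k * (complex_of_real x - complex_of_real x0)^k) = c k * (x - x0) ^ k"
          unfolding e c_def by (rule rw)
      qed
      ultimately show "(\<lambda>k. c k * (x - x0) ^ k) sums F x" by (simp add: F_def)
    qed
    then show "\<exists>r>0. \<exists>c. \<forall>x. \<bar>x - x0\<bar> < r \<longrightarrow> (\<lambda>k. c k * (x - x0) ^ k) sums F x"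
      by (intro exI[of _ 1] conjI) auto
  qed
  show ?thesis using RA F0 idF by blast
qed


definition form :: "(real^3 \<Rightarrow> real^3 \<Rightarrow> real^3) \<Rightarrow> (real^3 \<Rightarrow> real) \<Rightarrow> nat \<Rightarrow> real \<Rightarrow> real^3 \<Rightarrow> real^3 \<Rightarrow> real^3" where
  "form br k n c x z = (c * k x ^ ((n - 1) div 2)) *\<^sub>R (if odd n then br x z else br x (br x z))"

lemma evenodd_combine:
  fixes a :: "nat \<Rightarrow> 'a::real_normed_vector"
  assumes E: "(\<lambda>m. a (2*m)) sums SE" and O: "(\<lambda>m. a (2*m+1)) sums SO"
  shows "a sums (SE + SO)"
proof -
  have sm1: "strict_mono (\<lambda>m::nat. 2*m)" by (auto simp: strict_mono_def)
  have z1: "\<And>n. n \<notin> range (\<lambda>m::nat. 2*m) \<Longrightarrow> (if even n then a n else 0) = 0"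
    by (auto elim!: evenE)
  have E': "(\<lambda>m. (\<lambda>n. if even n then a n else 0) (2*m)) sums SE" using E by simp
  have e: "(\<lambda>n. if even n then a n else 0) sums SE"
    by (rule sums_mono_reindex[OF sm1, of "\<lambda>n. if even n then a n else 0" SE, THEN iffD1, OF z1 E'])
  have sm2: "strict_mono (\<lambda>m::nat. 2*m+1)" by (auto simp: strict_mono_def)
  have z2: "\<And>n. n \<notin> range (\<lambda>m::nat. 2*m+1) \<Longrightarrow> (if odd n then a n else 0) = 0"
    by (auto elim!: oddE)
  have O': "(\<lambda>m. (\<lambda>n. if odd n then a n else 0) (2*m+1)) sums SO" using O by simp
  have o: "(\<lambda>n. if odd n then a n else 0) sums SO"
    by (rule sums_mono_reindex[OF sm2, of "\<lambda>n. if odd n then a n else 0" SO, THEN iffD1, OF z2 O'])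
  have "(\<lambda>n. (if even n then a n else 0) + (if odd n then a n else 0)) sums (SE + SO)"
    by (rule sums_add[OF e o])
  moreover have "(\<lambda>n. (if even n then a n else 0) + (if odd n then a n else 0)) = a" by auto
  ultimately show ?thesis by simp
qed

lemma pser_sums_real: "entire_coeffs a \<Longrightarrow> (\<lambda>n. a n * s^n) sums pser a (s::real)"
  using pser_sums[of a s] by simp

lemma lin_exp_formula:
  fixes br :: "real^3 \<Rightarrow> real^3 \<Rightarrow> real^3" and x :: "real^3" and \<kappa> f :: real
  assumes lin: "linear (br x)" and ad3: "\<And>z. br x (br x (br x z)) = \<kappa> *\<^sub>R br x z"
  shows "lin_exp (\<lambda>z. f *\<^sub>R br x z) z = z + (f * pser phic (f^2 * \<kappa>)) *\<^sub>R br x z + (f^2 * pser psic (f^2 * \<kappa>)) *\<^sub>R br x (br x z)"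
proof -
  define A where "A = (\<lambda>z. f *\<^sub>R br x z)"
  have Asc: "A (c *\<^sub>R w) = c *\<^sub>R A w" for c w using lin by (simp add: A_def linear_cmul)
  have odd: "(A ^^ (2*m+1)) z = (f * (f^2 * \<kappa>)^m) *\<^sub>R br x z" for m
  proof (induction m)
    case 0 then show ?case by (simp add: A_def)
  next
    case (Suc m)
    have "(A ^^ (2*Suc m+1)) z = A (A ((A ^^ (2*m+1)) z))"
      by (simp add: numeral_eq_Suc)
    also have "\<dots> = (f * (f^2 * \<kappa>)^m) *\<^sub>R A (A (br x z))" by (simp only: Suc Asc)
    also have "A (A (br x z)) = (f^2 * \<kappa>) *\<^sub>R br x z"
      using lin by (simp add: A_def linear_cmul ad3 power2_eq_square)
    finally show ?case by (simp add: mult_ac)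
  qed
  have even: "(A ^^ (2*m+2)) z = (f^2 * (f^2 * \<kappa>)^m) *\<^sub>R br x (br x z)" for m
  proof -
    have "(A ^^ (2*m+2)) z = A ((A ^^ (2*m+1)) z)" by (simp add: numeral_eq_Suc)
    also have "\<dots> = (f * (f^2 * \<kappa>)^m) *\<^sub>R A (br x z)" by (simp only: odd Asc)
    finally show ?thesis by (simp add: A_def power2_eq_square mult_ac)
  qed
  define a where "a n = (1 / fact n) *\<^sub>R (A ^^ n) z" for n
  have O: "(\<lambda>m. a (2*m+1)) sums ((f * pser phic (f^2 * \<kappa>)) *\<^sub>R br x z)"
  proof -
    have "(\<lambda>m. (f * (phic m * (f^2 * \<kappa>)^m)) *\<^sub>R br x z) sums ((f * pser phic (f^2 * \<kappa>)) *\<^sub>R br x z)"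
      by (intro sums_scaleR_left sums_mult pser_sums_real entire_phic)
    moreover have "(\<lambda>m. a (2*m+1)) = (\<lambda>m. (f * (phic m * (f^2 * \<kappa>)^m)) *\<^sub>R br x z)"
      by (rule ext) (simp only: a_def odd, simp add: phic_def)
    ultimately show ?thesis by simp
  qed
  have E: "(\<lambda>m. a (2*m)) sums (z + (f^2 * pser psic (f^2 * \<kappa>)) *\<^sub>R br x (br x z))"
  proof -
    have "(\<lambda>m. (f^2 * (psic m * (f^2 * \<kappa>)^m)) *\<^sub>R br x (br x z)) sums ((f^2 * pser psic (f^2 * \<kappa>)) *\<^sub>R br x (br x z))"
      by (intro sums_scaleR_left sums_mult pser_sums_real entire_psic)
    moreover have "(\<lambda>m. a (2*(Suc m))) = (\<lambda>m. (f^2 * (psic m * (f^2 * \<kappa>)^m)) *\<^sub>R br x (br x z))"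
    proof
      fix m
      have "2 * Suc m = 2*m+2" by simp
      then show "a (2*(Suc m)) = (f^2 * (psic m * (f^2 * \<kappa>)^m)) *\<^sub>R br x (br x z)"
        by (simp only: a_def even) (simp add: psic_def)
    qed
    ultimately have s1: "(\<lambda>m. a (2*(Suc m))) sums ((f^2 * pser psic (f^2 * \<kappa>)) *\<^sub>R br x (br x z))" by simp
    have a0: "a (2*0) = z" by (simp add: a_def)
    have "(\<lambda>m. a (2*m)) sums ((f^2 * pser psic (f^2 * \<kappa>)) *\<^sub>R br x (br x z) + a (2*0))"
      using sums_Suc_iff[of "\<lambda>m. a (2*m)" "(f^2 * pser psic (f^2 * \<kappa>)) *\<^sub>R br x (br x z)"] s1 by blast
    then show ?thesis unfolding a0 by (simp add: add.commute)
  qed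
  have "a sums (z + (f^2 * pser psic (f^2 * \<kappa>)) *\<^sub>R br x (br x z) + (f * pser phic (f^2 * \<kappa>)) *\<^sub>R br x z)"
    by (rule evenodd_combine[OF E O])
  then show ?thesis unfolding lin_exp_def A_def[symmetric] a_def[symmetric]
    by (simp add: sums_iff algebra_simps)
qed


lemma summ_from_vec:
  fixes w :: "real^'n"
  assumes "summable (\<lambda>m. c m *\<^sub>R w)" and "w \<noteq> 0"
  shows "summable c"
proof -
  obtain j where j: "w $ j \<noteq> 0" using assms(2) by (auto simp: vec_eq_iff)
  have "summable (\<lambda>m. (c m *\<^sub>R w) $ j)" by (rule summable_vec_nth[OF assms(1)])
  then have "summable (\<lambda>m. w $ j * c m)" by (simp add: mult.commute)
  then show ?thesis using j by (simp add: summable_cmult_iff)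
qed

lemma entire_from:
  fixes \<beta> :: "nat \<Rightarrow> real"
  assumes S: "\<And>t. t \<noteq> 0 \<Longrightarrow> summable (\<lambda>m. \<beta> m * (t^2 * K)^m)" and K: "K \<noteq> 0"
  shows "entire_coeffs \<beta>"
  unfolding entire_coeffs_def
proof
  fix s :: real
  define t where "t = sqrt ((\<bar>s\<bar> + 1) / \<bar>K\<bar>)"
  have t0: "t \<noteq> 0" using K by (simp add: t_def)
  have "t^2 = (\<bar>s\<bar> + 1) / \<bar>K\<bar>" unfolding t_def using K by simp
  then have "\<bar>t^2 * K\<bar> = \<bar>s\<bar> + 1" using K by (simp add: abs_mult)
  then have "norm s < norm (t^2 * K)" by simp
  from powser_insidea[OF S[OF t0] this] have "summable (\<lambda>n. norm (\<beta> n * s^n))" .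
  then show "summable (\<lambda>n. \<beta> n * s^n)" by (rule summable_norm_cancel)
qed

context rackctx begin

lemma series_parts:
  "(\<lambda>m. t^(2*m) *\<^sub>R P (2*m) v z) sums ((1/2) *\<^sub>R (rk (t *\<^sub>R v) z + rk ((-t) *\<^sub>R v) z)) \<and>
   (\<lambda>m. t^(2*m+1) *\<^sub>R P (2*m+1) v z) sums ((1/2) *\<^sub>R (rk (t *\<^sub>R v) z - rk ((-t) *\<^sub>R v) z))"
proof -
  have A: "(\<lambda>n. t^n *\<^sub>R P n v z) sums rk (t *\<^sub>R v) z" by (rule P_series)
  have B: "(\<lambda>n. (-1::real)^n *\<^sub>R (t^n *\<^sub>R P n v z)) sums rk ((-t) *\<^sub>R v) z"
  proof -
    have "(\<lambda>n. (-t)^n *\<^sub>R P n v z) sums rk ((-t) *\<^sub>R v) z" by (rule P_series)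
    moreover have "(\<lambda>n. (-t)^n *\<^sub>R P n v z) = (\<lambda>n. (-1::real)^n *\<^sub>R (t^n *\<^sub>R P n v z))"
      by (rule ext) (simp add: power_minus[of t])
    ultimately show ?thesis by simp
  qed
  show ?thesis using evenodd_sums[OF A B] by simp
qed

lemma rk_formula_ex:
  fixes k :: "real^3 \<Rightarrow> real" and v z0 z1 :: "real^3"
  assumes br_lin: "\<And>x. linear (br x)" and br_scale: "\<And>t x z. br (t *\<^sub>R x) z = t *\<^sub>R br x z"
    and k_hom: "\<And>t x. k (t *\<^sub>R x) = t^2 * k x"
    and struct: "\<And>n. n \<ge> 1 \<Longrightarrow> \<exists>c. \<forall>x z. P n x z = form br k n c x z"
    and wk: "k v \<noteq> 0" and w0: "br v z0 \<noteq> 0" and w1: "br v (br v z1) \<noteq> 0"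
  shows "\<exists>\<beta> \<gamma>. entire_coeffs \<beta> \<and> entire_coeffs \<gamma> \<and> \<beta> 0 = 1 \<and>
           (\<forall>x z. rk x z = z + pser \<beta> (k x) *\<^sub>R br x z + pser \<gamma> (k x) *\<^sub>R br x (br x z))"
proof -
  define cf where "cf n = (SOME c. \<forall>x z. P n x z = form br k n c x z)" for n
  have cfP: "P n x z = form br k n (cf n) x z" if "n \<ge> 1" for n x z
    using someI_ex[OF struct[OF that]] unfolding cf_def by blast
  define \<beta> where "\<beta> m = cf (2*m+1)" for m
  define \<gamma> where "\<gamma> m = cf (2*m+2)" for m
  have Podd: "P (2*m+1) x z = (\<beta> m * k x ^ m) *\<^sub>R br x z" for m x z
    using cfP[of "2*m+1" x z] by (simp add: form_def \<beta>_def)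
  have Peven: "P (2*m+2) x z = (\<gamma> m * k x ^ m) *\<^sub>R br x (br x z)" for m x z
  proof -
    have "(2*m+2-1) div 2 = m" by simp
    moreover have "\<not> odd (2*m+2)" by simp
    ultimately show ?thesis using cfP[of "2*m+2" x z] by (simp add: form_def \<gamma>_def)
  qed
  have b0: "\<beta> 0 = 1"
  proof -
    have "P 1 v z0 = br v z0" by (rule P1)
    moreover have "P 1 v z0 = \<beta> 0 *\<^sub>R br v z0" using Podd[of 0 v z0] by simp
    ultimately have "(\<beta> 0 - 1) *\<^sub>R br v z0 = 0" by (simp add: algebra_simps)
    then show ?thesis using w0 by simp
  qed
  have eb: "entire_coeffs \<beta>"
  proof (rule entire_from[OF _ wk])
    fix t :: real assume t: "t \<noteq> 0"
    have "summable (\<lambda>m. t^(2*m+1) *\<^sub>R P (2*m+1) v z0)" using series_parts by (auto simp: sums_iff)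
    moreover have "(\<lambda>m. t^(2*m+1) *\<^sub>R P (2*m+1) v z0) = (\<lambda>m. (t * (\<beta> m * (t^2 * k v)^m)) *\<^sub>R br v z0)"
    proof
      fix m
      have p: "t^(2*m+1) = t * (t^2)^m" by (simp add: power_mult[symmetric] power_add mult.commute)
      show "t^(2*m+1) *\<^sub>R P (2*m+1) v z0 = (t * (\<beta> m * (t^2 * k v)^m)) *\<^sub>R br v z0"
        by (simp only: Podd p) (simp add: power_mult_distrib mult_ac)
    qed
    ultimately have "summable (\<lambda>m. t * (\<beta> m * (t^2 * k v)^m))" using summ_from_vec w0 by metis
    then show "summable (\<lambda>m. \<beta> m * (t^2 * k v)^m)" using t by (simp add: summable_cmult_iff)
  qed
  have ec: "entire_coeffs \<gamma>"
  proof (rule entire_from[OF _ wk])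
    fix t :: real assume t: "t \<noteq> 0"
    have "summable (\<lambda>m. t^(2*m) *\<^sub>R P (2*m) v z1)" using series_parts by (auto simp: sums_iff)
    then have "summable (\<lambda>m. t^(2*(Suc m)) *\<^sub>R P (2*(Suc m)) v z1)"
      using summable_Suc_iff[of "\<lambda>m. t^(2*m) *\<^sub>R P (2*m) v z1"] by simp
    moreover have "(\<lambda>m. t^(2*(Suc m)) *\<^sub>R P (2*(Suc m)) v z1) = (\<lambda>m. (t^2 * (\<gamma> m * (t^2 * k v)^m)) *\<^sub>R br v (br v z1))"
    proof
      fix m
      have k2: "2 * Suc m = 2*m+2" by simp
      have e0: "(t^2)^m = t^(2*m)" by (rule power_mult[symmetric])
      have p: "t^(2*m+2) = t^2 * (t^2)^m" unfolding e0 power_add by (rule mult.commute)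
      show "t^(2*(Suc m)) *\<^sub>R P (2*(Suc m)) v z1 = (t^2 * (\<gamma> m * (t^2 * k v)^m)) *\<^sub>R br v (br v z1)"
        unfolding k2 by (simp only: Peven p) (simp add: power_mult_distrib mult_ac)
    qed
    ultimately have "summable (\<lambda>m. t^2 * (\<gamma> m * (t^2 * k v)^m))" using summ_from_vec w1 by metis
    then show "summable (\<lambda>m. \<gamma> m * (t^2 * k v)^m)" using t by (simp add: summable_cmult_iff)
  qed
  have form: "rk x z = z + pser \<beta> (k x) *\<^sub>R br x z + pser \<gamma> (k x) *\<^sub>R br x (br x z)" for x z
  proof -
    have sp: "(\<lambda>m. 1^(2*m) *\<^sub>R P (2*m) x z) sums ((1/2) *\<^sub>R (rk (1 *\<^sub>R x) z + rk ((-1) *\<^sub>R x) z)) \<and>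
       (\<lambda>m. 1^(2*m+1) *\<^sub>R P (2*m+1) x z) sums ((1/2) *\<^sub>R (rk (1 *\<^sub>R x) z - rk ((-1) *\<^sub>R x) z))"
      by (rule series_parts)
    define Ev where "Ev = (1/2::real) *\<^sub>R (rk x z + rk (-x) z)"
    define Od where "Od = (1/2::real) *\<^sub>R (rk x z - rk (-x) z)"
    have sE: "(\<lambda>m. P (2*m) x z) sums Ev" using sp by (simp add: Ev_def)
    have sO: "(\<lambda>m. P (2*m+1) x z) sums Od" using sp by (simp add: Od_def)
    have "(\<lambda>m. (\<beta> m * k x ^ m) *\<^sub>R br x z) sums (pser \<beta> (k x) *\<^sub>R br x z)"
      by (intro sums_scaleR_left pser_sums_real eb)
    then have Od: "Od = pser \<beta> (k x) *\<^sub>R br x z" using sO Podd by (simp add: sums_unique2)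
    have "(\<lambda>m. (\<gamma> m * k x ^ m) *\<^sub>R br x (br x z)) sums (pser \<gamma> (k x) *\<^sub>R br x (br x z))"
      by (intro sums_scaleR_left pser_sums_real ec)
    moreover have "(\<lambda>m. P (2*(Suc m)) x z) = (\<lambda>m. (\<gamma> m * k x ^ m) *\<^sub>R br x (br x z))"
    proof
      fix m
      have "2 * Suc m = 2*m+2" by simp
      then show "P (2*(Suc m)) x z = (\<gamma> m * k x ^ m) *\<^sub>R br x (br x z)" by (simp only: Peven)
    qed
    ultimately have "(\<lambda>m. P (2*(Suc m)) x z) sums (pser \<gamma> (k x) *\<^sub>R br x (br x z))" by simp
    then have "(\<lambda>m. P (2*m) x z) sums (pser \<gamma> (k x) *\<^sub>R br x (br x z) + P (2*0) x z)"
      using sums_Suc_iff[of "\<lambda>m. P (2*m) x z"] by blast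
    then have Ev: "Ev = z + pser \<gamma> (k x) *\<^sub>R br x (br x z)" using sE by (simp add: sums_unique2 P0 add.commute)
    have "Ev + Od = (1/2::real) *\<^sub>R ((rk x z + rk (-x) z) + (rk x z - rk (-x) z))"
      unfolding Ev_def Od_def by (rule scaleR_add_right[symmetric])
    also have "(rk x z + rk (-x) z) + (rk x z - rk (-x) z) = rk x z + rk x z" by simp
    finally have "rk x z = Ev + Od" by simp
    then show ?thesis using Ev Od by simp
  qed
  show ?thesis using eb ec b0 form by blast
qed

end


lemma v3_eq: "(x::real^3) = y \<longleftrightarrow> x$1 = y$1 \<and> x$2 = y$2 \<and> x$3 = y$3"
  by (simp add: vec_eq_iff forall_3)

lemma vd3:
  assumes "(f1 has_real_derivative d1) (at t)" "(f2 has_real_derivative d2) (at t)" "(f3 has_real_derivative d3) (at t)"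
  shows "((\<lambda>t. vector [f1 t, f2 t, f3 t] :: real^3) has_vector_derivative vector [d1, d2, d3]) (at t)"
proof -
  have ex: "\<And>a b c. (vector [a, b, c] :: real^3) = a *\<^sub>R axis 1 1 + b *\<^sub>R axis 2 1 + c *\<^sub>R axis 3 1"
    by (simp add: v3_eq axis_def)
  have sc: "((\<lambda>x. f x *\<^sub>R v) has_vector_derivative d *\<^sub>R v) (at t)"
    if "(f has_real_derivative d) (at t)" for f d and v :: "real^3"
    using has_vector_derivative_scaleR[OF that has_vector_derivative_const[of v]] by simp
  show ?thesis unfolding ex
    by (intro has_vector_derivative_add sc assms)
qed

lemma so3_c [simp]:
  "so3_bracket x y $ 1 = x$2 * y$3 - x$3 * y$2"
  "so3_bracket x y $ 2 = x$3 * y$1 - x$1 * y$3"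
  "so3_bracket x y $ 3 = x$1 * y$2 - x$2 * y$1"
  by (simp_all add: so3_bracket_def)

lemma so3_lin: "linear (so3_bracket x)"
  by (rule linearI) (simp_all add: v3_eq algebra_simps)

lemma so3_scale: "so3_bracket (t *\<^sub>R x) z = t *\<^sub>R so3_bracket x z"
  by (simp add: v3_eq algebra_simps)

definition kso3 :: "real^3 \<Rightarrow> real" where "kso3 x = - (x$1^2 + x$2^2 + x$3^2)"

lemma kso3: "killing_half so3_bracket x = kso3 x"
  by (simp add: killing_half_def kso3_def sum_3 axis_def power2_eq_square algebra_simps)

lemma kso3_hom: "kso3 (t *\<^sub>R x) = t^2 * kso3 x"
  by (simp add: kso3_def power_mult_distrib algebra_simps)

lemma so3_ad3: "so3_bracket x (so3_bracket x (so3_bracket x z)) = kso3 x *\<^sub>R so3_bracket x z"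
  by (simp add: v3_eq kso3_def power2_eq_square algebra_simps)

definition rot1 :: "real \<Rightarrow> real \<Rightarrow> real^3 \<Rightarrow> real^3" where
  "rot1 c s x = vector [x$1, c * x$2 - s * x$3, s * x$2 + c * x$3]"
definition rot3 :: "real \<Rightarrow> real \<Rightarrow> real^3 \<Rightarrow> real^3" where
  "rot3 c s x = vector [c * x$1 - s * x$2, s * x$1 + c * x$2, x$3]"

lemma rot1_c [simp]: "rot1 c s x $ 1 = x$1" "rot1 c s x $ 2 = c * x$2 - s * x$3" "rot1 c s x $ 3 = s * x$2 + c * x$3"
  by (simp_all add: rot1_def)
lemma rot3_c [simp]: "rot3 c s x $ 1 = c * x$1 - s * x$2" "rot3 c s x $ 2 = s * x$1 + c * x$2" "rot3 c s x $ 3 = x$3"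
  by (simp_all add: rot3_def)

lemma rot1_lin: "linear (rot1 c s)" by (rule linearI) (simp_all add: v3_eq algebra_simps)
lemma rot3_lin: "linear (rot3 c s)" by (rule linearI) (simp_all add: v3_eq algebra_simps)

lemma rot1_aut: "c^2 + s^2 = 1 \<Longrightarrow> so3_bracket (rot1 c s a) (rot1 c s b) = rot1 c s (so3_bracket a b)"
  unfolding v3_eq by simp algebra
lemma rot3_aut: "c^2 + s^2 = 1 \<Longrightarrow> so3_bracket (rot3 c s a) (rot3 c s b) = rot3 c s (so3_bracket a b)"
  unfolding v3_eq by simp algebra
lemma rot1_k: "c^2 + s^2 = 1 \<Longrightarrow> kso3 (rot1 c s x) = kso3 x"
  unfolding kso3_def by simp algebra
lemma rot3_k: "c^2 + s^2 = 1 \<Longrightarrow> kso3 (rot3 c s x) = kso3 x"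
  unfolding kso3_def by simp algebra
lemma rot1_inv: "c^2 + s^2 = 1 \<Longrightarrow> rot1 c (-s) (rot1 c s x) = x"
  unfolding v3_eq by simp algebra
lemma rot3_inv: "c^2 + s^2 = 1 \<Longrightarrow> rot3 c (-s) (rot3 c s x) = x"
  unfolding v3_eq by simp algebra

definition e1 :: "real^3" where "e1 = vector [1, 0, 0]"
definition e2 :: "real^3" where "e2 = vector [0, 1, 0]"
definition e3 :: "real^3" where "e3 = vector [0, 0, 1]"

lemma e_c [simp]: "e1$1 = 1" "e1$2 = 0" "e1$3 = 0" "e2$1 = 0" "e2$2 = 1" "e2$3 = 0" "e3$1 = 0" "e3$2 = 0" "e3$3 = 1"
  by (simp_all add: e1_def e2_def e3_def)

lemma rot1_comm: "rot1 c s (so3_bracket e1 y) = so3_bracket e1 (rot1 c s y)"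
  by (simp add: v3_eq algebra_simps)
lemma rot3_comm: "rot3 c s (so3_bracket e3 y) = so3_bracket e3 (rot3 c s y)"
  by (simp add: v3_eq algebra_simps)

lemma rot1_deriv: "((\<lambda>t. rot1 (cos t) (sin t) y) has_vector_derivative so3_bracket e1 (rot1 (cos t) (sin t) y)) (at t)"
proof -
  have "((\<lambda>t. vector [y$1, cos t * y$2 - sin t * y$3, sin t * y$2 + cos t * y$3] :: real^3) has_vector_derivative
          vector [0, - sin t * y$2 - cos t * y$3, cos t * y$2 - sin t * y$3]) (at t)"
    by (intro vd3 derivative_eq_intros) auto
  moreover have "vector [0, - sin t * y$2 - cos t * y$3, cos t * y$2 - sin t * y$3] = so3_bracket e1 (rot1 (cos t) (sin t) y)"
    by (simp add: v3_eq)
  ultimately show ?thesis by (simp add: rot1_def)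
qed

lemma rot3_deriv: "((\<lambda>t. rot3 (cos t) (sin t) y) has_vector_derivative so3_bracket e3 (rot3 (cos t) (sin t) y)) (at t)"
proof -
  have "((\<lambda>t. vector [cos t * y$1 - sin t * y$2, sin t * y$1 + cos t * y$2, y$3] :: real^3) has_vector_derivative
          vector [- sin t * y$1 - cos t * y$2, cos t * y$1 - sin t * y$2, 0]) (at t)"
    by (intro vd3 derivative_eq_intros) auto
  moreover have "vector [- sin t * y$1 - cos t * y$2, cos t * y$1 - sin t * y$2, 0] = so3_bracket e3 (rot3 (cos t) (sin t) y)"
    by (simp add: v3_eq)
  ultimately show ?thesis by (simp add: rot3_def)
qed


lemma form_hom:
  assumes br_lin: "\<And>x. linear (br x)" and br_scale: "\<And>t x z. br (t *\<^sub>R x) z = t *\<^sub>R br x z"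
    and k_hom: "\<And>t x. k (t *\<^sub>R x) = t^2 * k x" and n: "n \<ge> 1"
  shows "form br k n c (r *\<^sub>R x) z = r^n *\<^sub>R form br k n c x z"
proof (cases "odd n")
  case True
  then obtain m where m: "n = 2*m+1" by (auto elim: oddE)
  have "form br k n c (r *\<^sub>R x) z = (c * (r^2 * k x)^m * r) *\<^sub>R br x z"
    by (simp add: form_def m k_hom br_scale)
  also have "\<dots> = r^n *\<^sub>R form br k n c x z"
    by (simp add: form_def m power_mult_distrib power_mult[symmetric] power_add mult_ac)
  finally show ?thesis .
next
  case False
  then obtain m' where m': "n = 2*m'" by (auto elim: evenE)
  define m where "m = m' - 1"
  have m: "n = 2*m+2" using m' n by (simp add: m_def)
  have d: "(2*m+2-1) div 2 = m" by simp
  have "form br k n c (r *\<^sub>R x) z = (c * (r^2 * k x)^m * r^2) *\<^sub>R br x (br x z)"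
    by (simp add: form_def m d k_hom br_scale power2_eq_square linear_cmul[OF br_lin])
  also have "\<dots> = r^n *\<^sub>R form br k n c x z"
  proof -
    have e: "r^n = (r^2)^m * r^2" unfolding m by (simp only: power_add power_mult)
    show ?thesis unfolding e by (simp add: form_def m d power_mult_distrib mult_ac)
  qed
  finally show ?thesis .
qed

context rackctx begin

lemma V_transport:
  fixes g :: "real^3 \<Rightarrow> real^3" and k :: "real^3 \<Rightarrow> real"
  assumes lg: "linear g" and surj: "\<And>z. \<exists>z'. z = g z'" and eqv: "\<And>x z. rk (g x) (g z) = g (rk x z)"
   and aut: "\<And>a b. br (g a) (g b) = g (br a b)" and kinv: "\<And>x. k (g x) = k x"
   and V: "\<forall>z. P n x z = form br k n c x z"
  shows "\<forall>z. P n (g x) z = form br k n c (g x) z"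
proof
  fix z
  obtain z' where z: "z = g z'" using surj by blast
  have "P n (g x) (g z') = g (P n x z')" by (rule P_equiv[OF lg eqv])
  also have "\<dots> = g (form br k n c x z')" using V by simp
  also have "\<dots> = form br k n c (g x) (g z')"
    using lg by (simp add: form_def linear_cmul aut kinv)
  finally show "P n (g x) z = form br k n c (g x) z" using z by simp
qed

lemma V_line:
  fixes k :: "real^3 \<Rightarrow> real"
  assumes br_lin: "\<And>x. linear (br x)" and br_scale: "\<And>t x z. br (t *\<^sub>R x) z = t *\<^sub>R br x z"
    and k_hom: "\<And>t x. k (t *\<^sub>R x) = t^2 * k x" and n: "n \<ge> 1"
    and V: "\<forall>z. P n x z = form br k n c x z"
  shows "\<forall>z. P n (r *\<^sub>R x) z = form br k n c (r *\<^sub>R x) z"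
  using V by (simp add: P_hom form_hom[OF br_lin br_scale k_hom n])

lemma rk_zero: "rk x 0 = 0" using lin linear_0 by blast

lemma rk_nz: "z \<noteq> 0 \<Longrightarrow> rk x z \<noteq> 0"
proof
  assume z: "z \<noteq> 0" and r: "rk x z = 0"
  have "inj (rk x)" using bij bij_is_inj by blast
  then show False using r rk_zero z by (metis injD)
qed

lemma P_fix:
  assumes "\<And>t. rk (t *\<^sub>R v) w = w"
  shows "P n v w = (if n = 0 then w else 0)"
proof -
  have "(\<lambda>n. P n v w) = (\<lambda>n. if n = 0 then w else 0)"
  proof (rule powser_unique_vec[where f = "\<lambda>t. w"])
    show "(\<lambda>n. t^n *\<^sub>R P n v w) sums w" for t using P_series[of t v w] assms by simp
    show "(\<lambda>n. t^n *\<^sub>R (if n = 0 then w else 0)) sums w" for t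
      using sums_single[of 0 "\<lambda>_. w"] by (simp add: if_distrib cong: if_cong)
  qed
  then show ?thesis by metis
qed

end


lemma so3_orbit: "\<exists>r \<theta> \<phi>. x = rot3 (cos \<phi>) (sin \<phi>) (rot1 (cos \<theta>) (sin \<theta>) (r *\<^sub>R e3))"
proof -
  define \<rho> where "\<rho> = sqrt (x$1^2 + x$2^2)"
  define r where "r = sqrt (\<rho>^2 + x$3^2)"
  have \<rho>2: "\<rho>^2 = x$1^2 + x$2^2" unfolding \<rho>_def by simp
  have r2: "r^2 = \<rho>^2 + x$3^2" unfolding r_def by simp
  have \<rho>0: "\<rho> \<ge> 0" unfolding \<rho>_def by simp
  have r0: "r \<ge> 0" unfolding r_def by simp
  obtain \<theta> where \<theta>: "x$3 = r * cos \<theta>" "\<rho> = - r * sin \<theta>"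
  proof (cases "r = 0")
    case True
    then have "\<rho>^2 + x$3^2 = 0" using r2 by simp
    then have "\<rho> = 0" "x$3 = 0" by (simp_all add: add_nonneg_eq_0_iff)
    then show ?thesis using that[of 0] True by simp
  next
    case False
    have "(x$3 / r)^2 + (- \<rho> / r)^2 = (\<rho>^2 + x$3^2) / r^2" by (simp add: power_divide add_divide_distrib)
    also have "\<dots> = 1" unfolding r2[symmetric] using False by simp
    finally have "(x$3 / r)^2 + (- \<rho> / r)^2 = 1" .
    then obtain t where "x$3 / r = cos t" "- \<rho> / r = sin t" by (rule sincos_total_2pi)
    then show ?thesis using that[of t] False by (simp add: field_simps)
  qed
  obtain \<phi> where \<phi>: "x$1 = - sin \<phi> * \<rho>" "x$2 = cos \<phi> * \<rho>"
  proof (cases "\<rho> = 0")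
    case True
    then have "x$1^2 + x$2^2 = 0" using \<rho>2 by simp
    then have "x$1 = 0" "x$2 = 0" by (simp_all add: add_nonneg_eq_0_iff)
    then show ?thesis using that[of 0] True by simp
  next
    case False
    have "(x$2 / \<rho>)^2 + (- x$1 / \<rho>)^2 = (x$1^2 + x$2^2) / \<rho>^2" by (simp add: power_divide add_divide_distrib)
    also have "\<dots> = 1" unfolding \<rho>2[symmetric] using False by simp
    finally have "(x$2 / \<rho>)^2 + (- x$1 / \<rho>)^2 = 1" .
    then obtain t where "x$2 / \<rho> = cos t" "- x$1 / \<rho> = sin t" by (rule sincos_total_2pi)
    then show ?thesis using that[of t] False by (simp add: field_simps)
  qed
  have "x = rot3 (cos \<phi>) (sin \<phi>) (rot1 (cos \<theta>) (sin \<theta>) (r *\<^sub>R e3))"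
    using \<theta> \<phi> by (simp add: v3_eq algebra_simps)
  then show ?thesis by (rule exI[of _ r, OF exI[of _ \<theta>, OF exI[of _ \<phi>]]])
qed

lemma axis_e: "axis 1 1 = e1" "axis 2 1 = e2" "axis 3 1 = e3"
  by (simp_all add: v3_eq axis_def)

lemma lin3: "linear (M :: real^3 \<Rightarrow> real^3) \<Longrightarrow> M z = z$1 *\<^sub>R M e1 + z$2 *\<^sub>R M e2 + z$3 *\<^sub>R M e3"
  using lin_expand[of M z] by (simp add: sum_3 axis_e)

lemma comm_J:
  fixes M :: "real^3 \<Rightarrow> real^3"
  assumes lM: "linear M" and cM: "\<And>z. M (rot3 0 1 z) = rot3 0 1 (M z)"
  shows "M z = vector [(M e1)$1 * z$1 - (M e1)$2 * z$2, (M e1)$2 * z$1 + (M e1)$1 * z$2, (M e3)$3 * z$3]"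
    "M e1 = vector [(M e1)$1, (M e1)$2, 0]" "M e2 = vector [- (M e1)$2, (M e1)$1, 0]" "M e3 = vector [0, 0, (M e3)$3]"
proof -
  have J1: "rot3 0 1 e1 = e2" and J2: "rot3 0 1 e2 = - e1" and J3: "rot3 0 1 e3 = e3" by (simp_all add: v3_eq)
  have m2: "M e2 = rot3 0 1 (M e1)" using cM[of e1] J1 by simp
  have m2c: "(M e2)$1 = - (M e1)$2" "(M e2)$2 = (M e1)$1" "(M e2)$3 = (M e1)$3" using m2 by simp_all
  have "- M e1 = rot3 0 1 (M e2)" using cM[of e2] J2 lM by (simp add: linear_neg)
  then have "(- M e1)$3 = (rot3 0 1 (M e2))$3" by (rule arg_cong)
  then have m13: "(M e1)$3 = 0" using m2c by simp
  have A3: "M e3 = rot3 0 1 (M e3)" using cM[of e3] J3 by simp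
  have a1: "(M e3)$1 = (rot3 0 1 (M e3))$1" using A3 by (rule arg_cong)
  have a2: "(M e3)$2 = (rot3 0 1 (M e3))$2" using A3 by (rule arg_cong)
  have b1: "(M e3)$1 = - (M e3)$2" using a1 by simp
  have b2: "(M e3)$2 = (M e3)$1" using a2 by simp
  have m3: "(M e3)$1 = 0" "(M e3)$2 = 0" using b1 b2 by linarith+
  show "M e1 = vector [(M e1)$1, (M e1)$2, 0]" using m13 by (simp add: v3_eq)
  show "M e2 = vector [- (M e1)$2, (M e1)$1, 0]" using m2 m13 by (simp add: v3_eq)
  show "M e3 = vector [0, 0, (M e3)$3]" using m3 by (simp add: v3_eq)
  show "M z = vector [(M e1)$1 * z$1 - (M e1)$2 * z$2, (M e1)$2 * z$1 + (M e1)$1 * z$2, (M e3)$3 * z$3]"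
    using lin3[OF lM, of z] m2 m13 m3 by (simp add: v3_eq algebra_simps)
qed

context rackctx begin

lemma so3_eqv1:
  assumes br: "br = so3_bracket"
  shows "rk (rot1 (cos \<theta>) (sin \<theta>) x) (rot1 (cos \<theta>) (sin \<theta>) z) = rot1 (cos \<theta>) (sin \<theta>) (rk x z)"
proof (rule equiv_flow[where g = "\<lambda>\<theta>. rot1 (cos \<theta>) (sin \<theta>)" and u = e1])
  show "linear (rot1 (cos s) (sin s))" for s by (rule rot1_lin)
  show "rot1 (cos 0) (sin 0) y = y" for y by (simp add: v3_eq)
  show "((\<lambda>s. rot1 (cos s) (sin s) y) has_vector_derivative br e1 (rot1 (cos s) (sin s) y)) (at s)" for s y
    unfolding br by (rule rot1_deriv)
  show "rot1 (cos (-s)) (sin (-s)) (rot1 (cos s) (sin s) y) = y" for s y by (simp add: rot1_inv)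
  show "rot1 (cos s) (sin s) (br e1 y) = br e1 (rot1 (cos s) (sin s) y)" for s y unfolding br by (rule rot1_comm)
  show "linear (br e1)" unfolding br by (rule so3_lin)
qed

lemma so3_eqv3:
  assumes br: "br = so3_bracket"
  shows "rk (rot3 (cos \<theta>) (sin \<theta>) x) (rot3 (cos \<theta>) (sin \<theta>) z) = rot3 (cos \<theta>) (sin \<theta>) (rk x z)"
proof (rule equiv_flow[where g = "\<lambda>\<theta>. rot3 (cos \<theta>) (sin \<theta>)" and u = e3])
  show "linear (rot3 (cos s) (sin s))" for s by (rule rot3_lin)
  show "rot3 (cos 0) (sin 0) y = y" for y by (simp add: v3_eq)
  show "((\<lambda>s. rot3 (cos s) (sin s) y) has_vector_derivative br e3 (rot3 (cos s) (sin s) y)) (at s)" for s y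
    unfolding br by (rule rot3_deriv)
  show "rot3 (cos (-s)) (sin (-s)) (rot3 (cos s) (sin s) y) = y" for s y by (simp add: rot3_inv)
  show "rot3 (cos s) (sin s) (br e3 y) = br e3 (rot3 (cos s) (sin s) y)" for s y unfolding br by (rule rot3_comm)
  show "linear (br e3)" unfolding br by (rule so3_lin)
qed

end


context rackctx begin

lemma so3_struct:
  assumes br: "br = so3_bracket" and n: "n \<ge> 1"
  shows "\<exists>c. \<forall>x z. P n x z = form so3_bracket kso3 n c x z"
proof -
  define J where "J = rot3 0 1"
  have Jc: "J = rot3 (cos (pi/2)) (sin (pi/2))" by (simp add: J_def)
  have Jeqv: "rk (J x) (J z) = J (rk x z)" for x z using so3_eqv3[OF br, of "pi/2"] Jc by simp
  have Jlin: "linear J" unfolding J_def by (rule rot3_lin)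
  have Je3: "J (r *\<^sub>R e3) = r *\<^sub>R e3" for r by (simp add: J_def v3_eq)
  have b12: "so3_bracket e1 e2 = e3" and b23: "so3_bracket e2 e3 = e1" by (simp_all add: v3_eq)
  have fix3: "rk (r *\<^sub>R e3) e3 = e3" for r
  proof -
    define M where "M = rk (r *\<^sub>R e3)"
    have lM: "linear M" unfolding M_def by (rule lin)
    have cM: "M (rot3 0 1 z) = rot3 0 1 (M z)" for z
      using Jeqv[of "r *\<^sub>R e3" z] Je3[of r] unfolding M_def J_def by simp
    note C = comm_J[OF lM cM]
    define p where "p = (M e1)$1"
    define q where "q = (M e1)$2"
    define c where "c = (M e3)$3"
    have Me1: "M e1 = vector [p, q, 0]" using C(2) by (simp add: p_def q_def)
    have Me2: "M e2 = vector [-q, p, 0]" using C(3) by (simp add: p_def q_def)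
    have Me3: "M e3 = vector [0, 0, c]" using C(4) by (simp add: c_def)
    have au: "M (br u v) = br (M u) (M v)" for u v unfolding M_def by (rule autom)
    have "M e3 = so3_bracket (M e1) (M e2)" using au[of e1 e2] b12 br by simp
    then have "vector [0, 0, c] = so3_bracket (vector [p, q, 0]) (vector [-q, p, 0])"
      unfolding Me1 Me2 Me3 .
    then have c1: "c = p^2 + q^2" by (simp add: v3_eq power2_eq_square)
    have "M e1 = so3_bracket (M e2) (M e3)" using au[of e2 e3] b23 br by simp
    then have "vector [p, q, 0] = so3_bracket (vector [-q, p, 0]) (vector [0, 0, c])"
      unfolding Me1 Me2 Me3 .
    then have c2: "p = p * c" "q = q * c" by (simp_all add: v3_eq)
    have "M e1 \<noteq> 0" unfolding M_def by (rule rk_nz) (simp add: v3_eq)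
    then have "p \<noteq> 0 \<or> q \<noteq> 0" using Me1 by (auto simp: v3_eq)
    then have "c = 1" using c2 by auto
    then have "M e3 = e3" using Me3 by (simp add: v3_eq)
    then show ?thesis by (simp add: M_def)
  qed
  have P33: "P n e3 e3 = 0" using P_fix[of e3 e3 n] fix3 n by simp
  define M where "M = P n e3"
  have lM: "linear M" unfolding M_def by (rule P_lin)
  have cM: "M (rot3 0 1 z) = rot3 0 1 (M z)" for z
    using P_equiv[OF Jlin Jeqv, of n e3 z] Je3[of 1] unfolding M_def J_def by simp
  note C = comm_J[OF lM cM]
  define p where "p = (M e1)$1"
  define q where "q = (M e1)$2"
  have M33: "(M e3)$3 = 0" using P33 by (simp add: M_def)
  have Mz: "M z = vector [p * z$1 - q * z$2, q * z$1 + p * z$2, 0]" for z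
    using C(1)[of z] unfolding M33 by (simp add: p_def q_def)
  define R where "R = rot1 (-1) 0"
  have Rc: "R = rot1 (cos pi) (sin pi)" by (simp add: R_def)
  have Reqv: "rk (R x) (R z) = R (rk x z)" for x z using so3_eqv1[OF br, of pi] Rc by simp
  have Rlin: "linear R" unfolding R_def by (rule rot1_lin)
  have "P n (R e3) (R e1) = R (P n e3 e1)" by (rule P_equiv[OF Rlin Reqv])
  moreover have "R e3 = - e3" "R e1 = e1" by (simp_all add: R_def v3_eq)
  ultimately have "P n (-e3) e1 = R (M e1)" by (simp add: M_def)
  moreover have "P n (-e3) e1 = (-1)^n *\<^sub>R M e1" by (simp add: P_neg M_def)
  ultimately have par: "(-1::real)^n *\<^sub>R M e1 = R (M e1)" by simp
  have Me1: "M e1 = vector [p, q, 0]" using Mz[of e1] by simp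
  have "((-1::real)^n *\<^sub>R M e1)$1 = (R (M e1))$1" using par by (rule arg_cong)
  then have par1: "(-1::real)^n * p = p" unfolding Me1 by (simp add: R_def)
  have "((-1::real)^n *\<^sub>R M e1)$2 = (R (M e1))$2" using par by (rule arg_cong)
  then have par2: "(-1::real)^n * q = - q" unfolding Me1 by (simp add: R_def)
  define m where "m = (n - 1) div 2"
  have ke3: "kso3 e3 = -1" by (simp add: kso3_def)
  have mrw: "(n - Suc 0) div 2 = m" by (simp add: m_def)
  have mm: "(-1::real)^m * (-1)^m = 1" by (simp flip: power_add)
  obtain c0 where Ve3: "\<forall>z. P n e3 z = form br kso3 n c0 e3 z"
  proof (cases "odd n")
    case True
    then have p0: "p = 0" using par1 by simp
    show ?thesis
    proof (rule that[of "q * (-1)^m"], intro allI)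
      fix z
      have "P n e3 z = vector [- q * z$2, q * z$1, 0]" using Mz[of z] p0 by (simp add: M_def)
      also have "\<dots> = form br kso3 n (q * (-1)^m) e3 z"
        using True by (simp add: form_def br mrw ke3 v3_eq mult.assoc mm)
      finally show "P n e3 z = form br kso3 n (q * (-1)^m) e3 z" .
    qed
  next
    case False
    then have q0: "q = 0" using par2 by simp
    show ?thesis
    proof (rule that[of "- p * (-1)^m"], intro allI)
      fix z
      have "P n e3 z = vector [p * z$1, p * z$2, 0]" using Mz[of z] q0 by (simp add: M_def)
      also have "\<dots> = form br kso3 n (- p * (-1)^m) e3 z"
        using False by (simp add: form_def br mrw ke3 v3_eq mult.assoc mm)
      finally show "P n e3 z = form br kso3 n (- p * (-1)^m) e3 z" .
    qed
  qed
  have bl: "\<And>x. linear (br x)" unfolding br by (rule so3_lin)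
  have bs: "\<And>t x z. br (t *\<^sub>R x) z = t *\<^sub>R br x z" unfolding br by (rule so3_scale)
  have Vall: "\<forall>z. P n x z = form br kso3 n c0 x z" for x
  proof -
    obtain r \<theta> \<phi> where x: "x = rot3 (cos \<phi>) (sin \<phi>) (rot1 (cos \<theta>) (sin \<theta>) (r *\<^sub>R e3))"
      using so3_orbit by blast
    have V1: "\<forall>z. P n (r *\<^sub>R e3) z = form br kso3 n c0 (r *\<^sub>R e3) z"
      by (rule V_line[OF bl bs kso3_hom n Ve3])
    have V2: "\<forall>z. P n (rot1 (cos \<theta>) (sin \<theta>) (r *\<^sub>R e3)) z = form br kso3 n c0 (rot1 (cos \<theta>) (sin \<theta>) (r *\<^sub>R e3)) z"
    proof (rule V_transport[OF rot1_lin _ so3_eqv1[OF br] _ _ V1])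
      show "\<exists>z'. z = rot1 (cos \<theta>) (sin \<theta>) z'" for z
        using rot1_inv[of "cos \<theta>" "- sin \<theta>" z] by (intro exI[of _ "rot1 (cos \<theta>) (- sin \<theta>) z"]) simp
      show "br (rot1 (cos \<theta>) (sin \<theta>) a) (rot1 (cos \<theta>) (sin \<theta>) b) = rot1 (cos \<theta>) (sin \<theta>) (br a b)" for a b
        unfolding br by (rule rot1_aut) simp
      show "kso3 (rot1 (cos \<theta>) (sin \<theta>) x) = kso3 x" for x by (rule rot1_k) simp
    qed
    show ?thesis unfolding x
    proof (rule V_transport[OF rot3_lin _ so3_eqv3[OF br] _ _ V2])
      show "\<exists>z'. z = rot3 (cos \<phi>) (sin \<phi>) z'" for z
        using rot3_inv[of "cos \<phi>" "- sin \<phi>" z] by (intro exI[of _ "rot3 (cos \<phi>) (- sin \<phi>) z"]) simp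
      show "br (rot3 (cos \<phi>) (sin \<phi>) a) (rot3 (cos \<phi>) (sin \<phi>) b) = rot3 (cos \<phi>) (sin \<phi>) (br a b)" for a b
        unfolding br by (rule rot3_aut) simp
      show "kso3 (rot3 (cos \<phi>) (sin \<phi>) x) = kso3 x" for x by (rule rot3_k) simp
    qed
  qed
  then show ?thesis unfolding br by blast
qed

end


context rackctx begin

lemma final_from:
  fixes k :: "real^3 \<Rightarrow> real" and \<beta> \<gamma> :: "nat \<Rightarrow> real" and \<sigma> :: real
  assumes eb: "entire_coeffs \<beta>" and ec: "entire_coeffs \<gamma>" and b0: "\<beta> 0 = 1"
    and \<sigma>: "\<sigma> = 1 \<or> \<sigma> = -1"
    and rel: "\<And>s::real. s > 0 \<Longrightarrow> 2 * pser \<gamma> (\<sigma> * s) + (\<sigma> * s) * (pser \<gamma> (\<sigma> * s))^2 = (pser \<beta> (\<sigma> * s))^2"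
    and form: "\<And>x z. rk x z = z + pser \<beta> (k x) *\<^sub>R br x z + pser \<gamma> (k x) *\<^sub>R br x (br x z)"
    and bl: "\<And>x. linear (br x)" and ad3: "\<And>x z. br x (br x (br x z)) = k x *\<^sub>R br x z"
  shows "\<exists>F. real_analytic F \<and> F 0 = 1 \<and> (\<forall>x y. rk x y = lin_exp (\<lambda>z. F (k x) *\<^sub>R br x z) y)"
proof -
  obtain F where ra: "real_analytic F" and F0: "F 0 = 1"
    and id: "\<And>s. F s * pser phic ((F s)^2 * s) = pser \<beta> s \<and> (F s)^2 * pser psic ((F s)^2 * s) = pser \<gamma> s"
    using main_F[OF eb ec b0 \<sigma> rel] by blast
  have "rk x y = lin_exp (\<lambda>z. F (k x) *\<^sub>R br x z) y" for x y
  proof -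
    have "lin_exp (\<lambda>z. F (k x) *\<^sub>R br x z) y = y + (F (k x) * pser phic ((F (k x))^2 * k x)) *\<^sub>R br x y
           + ((F (k x))^2 * pser psic ((F (k x))^2 * k x)) *\<^sub>R br x (br x y)"
      by (rule lin_exp_formula[OF bl ad3])
    then show ?thesis using id[of "k x"] form[of x y] by simp
  qed
  then show ?thesis using ra F0 by blast
qed

lemma so3_main:
  assumes br: "br = so3_bracket"
  shows "\<exists>F. real_analytic F \<and> F 0 = 1 \<and> (\<forall>x y. rk x y = lin_exp (\<lambda>z. F (killing_half br x) *\<^sub>R br x z) y)"
proof -
  have bl: "\<And>x. linear (br x)" unfolding br by (rule so3_lin)
  have bs: "\<And>t x z. br (t *\<^sub>R x) z = t *\<^sub>R br x z" unfolding br by (rule so3_scale)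
  have st: "\<And>n. n \<ge> 1 \<Longrightarrow> \<exists>c. \<forall>x z. P n x z = form br kso3 n c x z"
    using so3_struct[OF br] unfolding br by blast
  have w1: "kso3 e3 \<noteq> 0" by (simp add: kso3_def)
  have w2: "br e3 e1 \<noteq> 0" unfolding br by (simp add: v3_eq)
  have w3: "br e3 (br e3 e1) \<noteq> 0" unfolding br by (simp add: v3_eq)
  obtain \<beta> \<gamma> where eb: "entire_coeffs \<beta>" and ec: "entire_coeffs \<gamma>" and b0: "\<beta> 0 = 1"
    and form: "\<And>x z. rk x z = z + pser \<beta> (kso3 x) *\<^sub>R br x z + pser \<gamma> (kso3 x) *\<^sub>R br x (br x z)"
    using rk_formula_ex[OF bl bs kso3_hom st w1 w2 w3] by blast
  have rel: "2 * pser \<gamma> ((-1) * s) + ((-1) * s) * (pser \<gamma> ((-1) * s))^2 = (pser \<beta> ((-1) * s))^2" if s: "s > 0" for s :: real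
  proof -
    define r where "r = sqrt s"
    have r2: "r^2 = s" using s by (simp add: r_def)
    define x where "x = r *\<^sub>R e3"
    have kx: "kso3 x = - s" using r2 by (simp add: kso3_def x_def)
    define b where "b = pser \<beta> (- s)"
    define c where "c = pser \<gamma> (- s)"
    have x1: "rk x e1 = vector [1 - c * r^2, b * r, 0]"
      unfolding form kx b_def[symmetric] c_def[symmetric] by (simp add: br x_def v3_eq power2_eq_square)
    have x2: "rk x e2 = vector [- b * r, 1 - c * r^2, 0]"
      unfolding form kx b_def[symmetric] c_def[symmetric] by (simp add: br x_def v3_eq power2_eq_square)
    have x3: "rk x e3 = e3"
      unfolding form by (simp add: br x_def v3_eq)
    have "rk x (br e1 e2) = br (rk x e1) (rk x e2)" by (rule autom)
    moreover have "br e1 e2 = e3" unfolding br by (simp add: v3_eq)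
    ultimately have "e3 = so3_bracket (vector [1 - c * r^2, b * r, 0]) (vector [- b * r, 1 - c * r^2, 0])"
      using x1 x2 x3 br by simp
    then have "(1 - c * r^2)^2 + (b * r)^2 = 1" by (simp add: v3_eq power2_eq_square algebra_simps)
    then have "r^2 * (c^2 * r^2 - 2 * c + b^2) = 0" by (simp add: power2_eq_square algebra_simps)
    then have "c^2 * s - 2 * c + b^2 = 0" using s r2 by simp
    then show ?thesis by (simp add: b_def c_def power2_eq_square algebra_simps)
  qed
  have ad3: "\<And>x z. br x (br x (br x z)) = kso3 x *\<^sub>R br x z" unfolding br by (rule so3_ad3)
  have kh: "killing_half br x = kso3 x" for x unfolding br by (rule kso3)
  show ?thesis unfolding kh
    by (rule final_from[OF eb ec b0 _ rel form bl ad3]) simp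
qed

end


lemma sl2_c [simp]:
  "sl2_bracket x y $ 1 = x$2 * y$3 - x$3 * y$2"
  "sl2_bracket x y $ 2 = 2 * (x$1 * y$2 - x$2 * y$1)"
  "sl2_bracket x y $ 3 = 2 * (x$3 * y$1 - x$1 * y$3)"
  by (simp_all add: sl2_bracket_def)

lemma sl2_lin: "linear (sl2_bracket x)"
  by (rule linearI) (simp_all add: v3_eq algebra_simps)

lemma sl2_scale: "sl2_bracket (t *\<^sub>R x) z = t *\<^sub>R sl2_bracket x z"
  by (simp add: v3_eq algebra_simps)

definition ksl2 :: "real^3 \<Rightarrow> real" where "ksl2 x = 4 * x$1^2 + 4 * x$2 * x$3"

lemma ksl2: "killing_half sl2_bracket x = ksl2 x"
  by (simp add: killing_half_def ksl2_def sum_3 axis_def power2_eq_square algebra_simps)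

lemma ksl2_hom: "ksl2 (t *\<^sub>R x) = t^2 * ksl2 x"
  by (simp add: ksl2_def power_mult_distrib algebra_simps power2_eq_square)

lemma sl2_ad3: "sl2_bracket x (sl2_bracket x (sl2_bracket x z)) = ksl2 x *\<^sub>R sl2_bracket x z"
  by (simp add: v3_eq ksl2_def power2_eq_square algebra_simps)

definition gE :: "real \<Rightarrow> real^3 \<Rightarrow> real^3" where
  "gE s x = vector [x$1 + s * x$3, x$2 - 2 * s * x$1 - s^2 * x$3, x$3]"
definition gF :: "real \<Rightarrow> real^3 \<Rightarrow> real^3" where
  "gF s x = vector [x$1 - s * x$2, x$2, x$3 + 2 * s * x$1 - s^2 * x$2]"
definition dg :: "real \<Rightarrow> real^3 \<Rightarrow> real^3" where
  "dg d x = vector [x$1, d * x$2, x$3 / d]"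

lemma gE_c [simp]: "gE s x $ 1 = x$1 + s * x$3" "gE s x $ 2 = x$2 - 2 * s * x$1 - s^2 * x$3" "gE s x $ 3 = x$3"
  by (simp_all add: gE_def)
lemma gF_c [simp]: "gF s x $ 1 = x$1 - s * x$2" "gF s x $ 2 = x$2" "gF s x $ 3 = x$3 + 2 * s * x$1 - s^2 * x$2"
  by (simp_all add: gF_def)
lemma dg_c [simp]: "dg d x $ 1 = x$1" "dg d x $ 2 = d * x$2" "dg d x $ 3 = x$3 / d"
  by (simp_all add: dg_def)

lemma gE_lin: "linear (gE s)" by (rule linearI) (simp_all add: v3_eq algebra_simps)
lemma gF_lin: "linear (gF s)" by (rule linearI) (simp_all add: v3_eq algebra_simps)
lemma dg_lin: "linear (dg d)" by (rule linearI) (simp_all add: v3_eq algebra_simps add_divide_distrib)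

lemma gE_aut: "sl2_bracket (gE s a) (gE s b) = gE s (sl2_bracket a b)"
  by (simp add: v3_eq power2_eq_square algebra_simps)
lemma gF_aut: "sl2_bracket (gF s a) (gF s b) = gF s (sl2_bracket a b)"
  by (simp add: v3_eq power2_eq_square algebra_simps)
lemma dg_aut: "d \<noteq> 0 \<Longrightarrow> sl2_bracket (dg d a) (dg d b) = dg d (sl2_bracket a b)"
  by (simp add: v3_eq field_simps)
lemma gE_k: "ksl2 (gE s x) = ksl2 x" by (simp add: ksl2_def power2_eq_square algebra_simps)
lemma gF_k: "ksl2 (gF s x) = ksl2 x" by (simp add: ksl2_def power2_eq_square algebra_simps)
lemma gE_inv: "gE (-s) (gE s x) = x" by (simp add: v3_eq power2_eq_square algebra_simps)
lemma gF_inv: "gF (-s) (gF s x) = x" by (simp add: v3_eq power2_eq_square algebra_simps)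
lemma gE_0: "gE 0 x = x" by (simp add: v3_eq)
lemma gF_0: "gF 0 x = x" by (simp add: v3_eq)
lemma gE_comm: "gE s (sl2_bracket e2 y) = sl2_bracket e2 (gE s y)"
  by (simp add: v3_eq algebra_simps)
lemma gF_comm: "gF s (sl2_bracket e3 y) = sl2_bracket e3 (gF s y)"
  by (simp add: v3_eq algebra_simps)

lemma gE_deriv: "((\<lambda>s. gE s y) has_vector_derivative sl2_bracket e2 (gE s y)) (at s)"
proof -
  have "((\<lambda>s. vector [y$1 + s * y$3, y$2 - 2 * s * y$1 - s^2 * y$3, y$3] :: real^3) has_vector_derivative
          vector [y$3, - 2 * y$1 - 2 * s * y$3, 0]) (at s)"
    by (intro vd3 derivative_eq_intros) auto
  moreover have "vector [y$3, - 2 * y$1 - 2 * s * y$3, 0] = sl2_bracket e2 (gE s y)"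
    by (simp add: v3_eq algebra_simps)
  ultimately show ?thesis by (simp add: gE_def)
qed

lemma gF_deriv: "((\<lambda>s. gF s y) has_vector_derivative sl2_bracket e3 (gF s y)) (at s)"
proof -
  have "((\<lambda>s. vector [y$1 - s * y$2, y$2, y$3 + 2 * s * y$1 - s^2 * y$2] :: real^3) has_vector_derivative
          vector [- y$2, 0, 2 * y$1 - 2 * s * y$2]) (at s)"
    by (intro vd3 derivative_eq_intros) auto
  moreover have "vector [- y$2, 0, 2 * y$1 - 2 * s * y$2] = sl2_bracket e3 (gF s y)"
    by (simp add: v3_eq algebra_simps)
  ultimately show ?thesis by (simp add: gF_def)
qed

definition gH :: "real \<Rightarrow> real^3 \<Rightarrow> real^3" where "gH s = dg (exp (2 * s))"

lemma gH_deriv: "((\<lambda>s. gH s y) has_vector_derivative sl2_bracket e1 (gH s y)) (at s)"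
proof -
  have "((\<lambda>s. vector [y$1, exp (2 * s) * y$2, y$3 / exp (2 * s)] :: real^3) has_vector_derivative
          vector [0, 2 * exp (2 * s) * y$2, - 2 * y$3 / exp (2 * s)]) (at s)"
  proof -
    have e: "(\<lambda>s. y$3 / exp (2 * s)) = (\<lambda>s. y$3 * exp (- (2 * s)))" by (simp add: exp_minus field_simps)
    have "((\<lambda>s. y$3 * exp (- (2 * s))) has_real_derivative - 2 * y$3 / exp (2 * s)) (at s)"
      by (auto intro!: derivative_eq_intros simp: exp_minus field_simps)
    then show ?thesis unfolding e by (intro vd3 derivative_eq_intros) auto
  qed
  moreover have "vector [0, 2 * exp (2 * s) * y$2, - 2 * y$3 / exp (2 * s)] = sl2_bracket e1 (gH s y)"
    by (simp add: v3_eq gH_def algebra_simps)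
  ultimately show ?thesis by (simp add: gH_def dg_def)
qed

lemma gH_inv: "gH (-s) (gH s x) = x" by (simp add: v3_eq gH_def exp_minus)
lemma gH_0: "gH 0 x = x" by (simp add: v3_eq gH_def)
lemma gH_comm: "gH s (sl2_bracket e1 y) = sl2_bracket e1 (gH s y)"
  by (simp add: v3_eq gH_def algebra_simps)
lemma gH_lin: "linear (gH s)" unfolding gH_def by (rule dg_lin)


definition ispoly :: "(real \<Rightarrow> real) \<Rightarrow> bool" where "ispoly f \<longleftrightarrow> (\<exists>p. \<forall>s. f s = poly p s)"

lemma ispoly_const [intro]: "ispoly (\<lambda>s. c)"
  unfolding ispoly_def by (intro exI[of _ "[:c:]"]) simp
lemma ispoly_id [intro]: "ispoly (\<lambda>s. s)"
  unfolding ispoly_def by (intro exI[of _ "[:0, 1:]"]) simp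
lemma ispoly_add [intro]: "ispoly f \<Longrightarrow> ispoly g \<Longrightarrow> ispoly (\<lambda>s. f s + g s)"
  unfolding ispoly_def by (metis poly_add)
lemma ispoly_diff [intro]: "ispoly f \<Longrightarrow> ispoly g \<Longrightarrow> ispoly (\<lambda>s. f s - g s)"
  unfolding ispoly_def by (metis poly_diff)
lemma ispoly_mult [intro]: "ispoly f \<Longrightarrow> ispoly g \<Longrightarrow> ispoly (\<lambda>s. f s * g s)"
  unfolding ispoly_def by (metis poly_mult)
lemma ispoly_power [intro]: "ispoly f \<Longrightarrow> ispoly (\<lambda>s. f s ^ n)"
  by (induction n) auto

lemma ispoly_tail:
  assumes "ispoly f" and "\<And>s. s > S \<Longrightarrow> f s = 0"
  shows "f x = 0"
proof -
  obtain p where p: "\<And>s. f s = poly p s" using assms(1) unfolding ispoly_def by blast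
  show ?thesis
  proof (cases "p = 0")
    case True then show ?thesis using p by simp
  next
    case False
    have "{S<..} \<subseteq> {s. poly p s = 0}" using assms(2) p by auto
    then have "finite {S<..}" using poly_roots_finite[OF False] finite_subset by blast
    then show ?thesis using infinite_Ioi by blast
  qed
qed

lemma form_poly: "ispoly (\<lambda>s. form sl2_bracket ksl2 n c (x0 + s *\<^sub>R w) z $ j)"
proof -
  have j: "j = 1 \<or> j = 2 \<or> j = 3" using exhaust_3 by blast
  show ?thesis
    using j by (cases "odd n") (auto simp: form_def ksl2_def intro!: ispoly_add ispoly_diff ispoly_mult ispoly_power ispoly_const ispoly_id)
qed

lemma z_a: "(a::real) = d * a \<Longrightarrow> d \<noteq> 1 \<Longrightarrow> a = 0"
  using mult_cancel_right1[of a d] by auto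
lemma z_b: "(a::real) = a / d \<Longrightarrow> d \<noteq> 1 \<Longrightarrow> d \<noteq> 0 \<Longrightarrow> a = 0"
proof -
  assume h: "a = a / d" and d1: "d \<noteq> 1" and d0: "d \<noteq> 0"
  then have "a * d = a" by (simp add: field_simps)
  then show "a = 0" using d1 mult_cancel_left1[of a d] by auto
qed
lemma z_c: "d * (a::real) = a / d \<Longrightarrow> d * d \<noteq> 1 \<Longrightarrow> d \<noteq> 0 \<Longrightarrow> a = 0"
proof -
  assume h: "d * a = a / d" and d1: "d * d \<noteq> 1" and d0: "d \<noteq> 0"
  then have "(d * d) * a = a" by (simp add: field_simps)
  then show "a = 0" using d1 mult_cancel_right1[of a "d * d"] by auto
qed

lemma comm_D:
  fixes M :: "real^3 \<Rightarrow> real^3"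
  assumes lM: "linear M" and cM: "\<And>z. M (dg d z) = dg d (M z)" and d0: "d \<noteq> 0" and d1: "d \<noteq> 1" and d2: "d * d \<noteq> 1"
  shows "M z = vector [(M e1)$1 * z$1, (M e2)$2 * z$2, (M e3)$3 * z$3]"
proof -
  have D1: "dg d e1 = e1" and D2: "dg d e2 = d *\<^sub>R e2" and D3: "dg d e3 = (1/d) *\<^sub>R e3" by (simp_all add: v3_eq)
  have A1: "M e1 = dg d (M e1)" using cM[of e1] D1 by simp
  have A2: "d *\<^sub>R M e2 = dg d (M e2)" using cM[of e2] D2 lM by (simp add: linear_cmul)
  have A3: "(1/d) *\<^sub>R M e3 = dg d (M e3)" using cM[of e3] D3 lM by (simp add: linear_cmul)
  have "(M e1)$2 = (dg d (M e1))$2" using A1 by (rule arg_cong)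
  then have a12: "(M e1)$2 = 0" using d1 z_a by simp
  have "(M e1)$3 = (dg d (M e1))$3" using A1 by (rule arg_cong)
  then have a13: "(M e1)$3 = 0" using d1 d0 z_b by simp
  have "(d *\<^sub>R M e2)$1 = (dg d (M e2))$1" using A2 by (rule arg_cong)
  then have a21: "(M e2)$1 = 0" using d1 z_a[of "(M e2)$1" d] by (simp add: mult.commute)
  have "(d *\<^sub>R M e2)$3 = (dg d (M e2))$3" using A2 by (rule arg_cong)
  then have a23: "(M e2)$3 = 0" using d2 d0 z_c by simp
  have "((1/d) *\<^sub>R M e3)$1 = (dg d (M e3))$1" using A3 by (rule arg_cong)
  then have "(M e3)$1 = (M e3)$1 / d" by simp
  then have a31: "(M e3)$1 = 0" using d1 d0 z_b by blast
  have "((1/d) *\<^sub>R M e3)$2 = (dg d (M e3))$2" using A3 by (rule arg_cong)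
  then have "d * (M e3)$2 = (M e3)$2 / d" by simp
  then have a32: "(M e3)$2 = 0" using d2 d0 z_c by blast
  show ?thesis using lin3[OF lM, of z] a12 a13 a21 a23 a31 a32 by (simp add: v3_eq algebra_simps)
qed


context rackctx begin

lemma sl2_eqvE:
  assumes br: "br = sl2_bracket"
  shows "rk (gE s x) (gE s z) = gE s (rk x z)"
proof (rule equiv_flow[where g = gE and u = e2])
  show "linear (gE s)" for s by (rule gE_lin)
  show "gE 0 y = y" for y by (rule gE_0)
  show "((\<lambda>s. gE s y) has_vector_derivative br e2 (gE s y)) (at s)" for s y unfolding br by (rule gE_deriv)
  show "gE (-s) (gE s y) = y" for s y by (rule gE_inv)
  show "gE s (br e2 y) = br e2 (gE s y)" for s y unfolding br by (rule gE_comm)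
  show "linear (br e2)" unfolding br by (rule sl2_lin)
qed

lemma sl2_eqvF:
  assumes br: "br = sl2_bracket"
  shows "rk (gF s x) (gF s z) = gF s (rk x z)"
proof (rule equiv_flow[where g = gF and u = e3])
  show "linear (gF s)" for s by (rule gF_lin)
  show "gF 0 y = y" for y by (rule gF_0)
  show "((\<lambda>s. gF s y) has_vector_derivative br e3 (gF s y)) (at s)" for s y unfolding br by (rule gF_deriv)
  show "gF (-s) (gF s y) = y" for s y by (rule gF_inv)
  show "gF s (br e3 y) = br e3 (gF s y)" for s y unfolding br by (rule gF_comm)
  show "linear (br e3)" unfolding br by (rule sl2_lin)
qed

lemma sl2_eqvH:
  assumes br: "br = sl2_bracket"
  shows "rk (gH s x) (gH s z) = gH s (rk x z)"
proof (rule equiv_flow[where g = gH and u = e1])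
  show "linear (gH s)" for s by (rule gH_lin)
  show "gH 0 y = y" for y by (rule gH_0)
  show "((\<lambda>s. gH s y) has_vector_derivative br e1 (gH s y)) (at s)" for s y unfolding br by (rule gH_deriv)
  show "gH (-s) (gH s y) = y" for s y by (rule gH_inv)
  show "gH s (br e1 y) = br e1 (gH s y)" for s y unfolding br by (rule gH_comm)
  show "linear (br e1)" unfolding br by (rule sl2_lin)
qed

lemma sl2_struct:
  assumes br: "br = sl2_bracket" and n: "n \<ge> 1"
  shows "\<exists>c. \<forall>x z. P n x z = form sl2_bracket ksl2 n c x z"
proof -
  define d :: real where "d = exp 2"
  have d0: "d \<noteq> 0" and d1: "d \<noteq> 1" by (simp_all add: d_def)
  have "1 < d" by (simp add: d_def)
  then have d2: "d * d \<noteq> 1" by (metis less_1_mult less_irrefl)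
  have D: "gH 1 = dg d" by (simp add: gH_def d_def)
  have Deqv: "rk (dg d x) (dg d z) = dg d (rk x z)" for x z using sl2_eqvH[OF br, of 1] D by simp
  have Dlin: "linear (dg d)" by (rule dg_lin)
  have De1: "dg d (r *\<^sub>R e1) = r *\<^sub>R e1" for r by (simp add: v3_eq)
  have fix1: "rk (r *\<^sub>R e1) e1 = e1" for r
  proof -
    define M where "M = rk (r *\<^sub>R e1)"
    have lM: "linear M" unfolding M_def by (rule lin)
    have cM: "M (dg d z) = dg d (M z)" for z using Deqv[of "r *\<^sub>R e1" z] De1[of r] unfolding M_def by simp
    note C = comm_D[OF lM cM d0 d1 d2]
    define a where "a = (M e1)$1"
    define b where "b = (M e2)$2"
    have Me1: "M e1 = vector [a, 0, 0]" using C[of e1] by (simp add: a_def)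
    have Me2: "M e2 = vector [0, b, 0]" using C[of e2] by (simp add: b_def)
    have "M (br e1 e2) = br (M e1) (M e2)" unfolding M_def by (rule autom)
    moreover have "br e1 e2 = 2 *\<^sub>R e2" unfolding br by (simp add: v3_eq)
    ultimately have "2 *\<^sub>R M e2 = sl2_bracket (M e1) (M e2)" using lM br by (simp add: linear_cmul)
    then have "2 *\<^sub>R vector [0, b, 0] = sl2_bracket (vector [a, 0, 0]) (vector [0, b, 0])" unfolding Me1 Me2 .
    then have ab: "b = a * b" by (simp add: v3_eq)
    have "M e2 \<noteq> 0" unfolding M_def by (rule rk_nz) (simp add: v3_eq)
    then have "b \<noteq> 0" using Me2 by (auto simp: v3_eq)
    then have "a = 1" using ab by simp
    then show ?thesis using Me1 by (simp add: M_def v3_eq)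
  qed
  have P11: "P n e1 e1 = 0" using P_fix[of e1 e1 n] fix1 n by simp
  define M where "M = P n e1"
  have lM: "linear M" unfolding M_def by (rule P_lin)
  have cM: "M (dg d z) = dg d (M z)" for z
    using P_equiv[OF Dlin Deqv, of n e1 z] De1[of 1] unfolding M_def by simp
  have M11: "(M e1)$1 = 0" using P11 by (simp add: M_def)
  define \<beta> where "\<beta> = (M e2)$2"
  define \<gamma> where "\<gamma> = (M e3)$3"
  have Mz: "M z = vector [0, \<beta> * z$2, \<gamma> * z$3]" for z
    using comm_D[OF lM cM d0 d1 d2, of z] M11 by (simp add: \<beta>_def \<gamma>_def)
  define W :: "real^3 \<Rightarrow> real^3" where "W x = gE 1 (gF (-1) (gE 1 x))" for x
  have Wc: "W x = vector [- x$1, - x$3, - x$2]" for x by (simp add: W_def v3_eq algebra_simps)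
  have Weqv: "rk (W x) (W z) = W (rk x z)" for x z unfolding W_def
    by (simp add: sl2_eqvE[OF br] sl2_eqvF[OF br])
  have Wlin: "linear W" unfolding W_def[abs_def]
    using linear_compose[OF linear_compose[OF gE_lin gF_lin] gE_lin] by (simp add: o_def)
  have "P n (W e1) (W e2) = W (P n e1 e2)" by (rule P_equiv[OF Wlin Weqv])
  moreover have "W e1 = - e1" "W e2 = - e3" by (simp_all add: Wc v3_eq)
  ultimately have "P n (- e1) (- e3) = W (M e2)" by (simp add: M_def)
  moreover have "P n (- e1) (- e3) = - ((-1)^n *\<^sub>R M e3)" using P_neg lM by (simp add: M_def linear_neg)
  ultimately have "- ((-1::real)^n *\<^sub>R M e3) = W (M e2)" by simp
  then have "(- ((-1::real)^n *\<^sub>R M e3))$3 = (W (M e2))$3" by (rule arg_cong)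
  then have par: "(-1::real)^n * \<gamma> = \<beta>" using Mz[of e2] Mz[of e3] by (simp add: Wc)
  define m where "m = (n - 1) div 2"
  have mrw: "(n - Suc 0) div 2 = m" by (simp add: m_def)
  have ke1: "ksl2 e1 = 4" by (simp add: ksl2_def)
  have p4: "(4::real)^m \<noteq> 0" by simp
  obtain c0 where Ve1: "\<forall>z. P n e1 z = form br ksl2 n c0 e1 z"
  proof (cases "odd n")
    case True
    then have g: "\<gamma> = - \<beta>" using par by simp
    show ?thesis
    proof (rule that[of "\<beta> / (2 * 4^m)"], intro allI)
      fix z
      have "P n e1 z = vector [0, \<beta> * z$2, - \<beta> * z$3]" using Mz[of z] g by (simp add: M_def)
      also have "\<dots> = form br ksl2 n (\<beta> / (2 * 4^m)) e1 z"
        using True p4 by (simp add: form_def br mrw ke1 v3_eq)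
      finally show "P n e1 z = form br ksl2 n (\<beta> / (2 * 4^m)) e1 z" .
    qed
  next
    case False
    then have g: "\<gamma> = \<beta>" using par by simp
    show ?thesis
    proof (rule that[of "\<beta> / (4 * 4^m)"], intro allI)
      fix z
      have "P n e1 z = vector [0, \<beta> * z$2, \<beta> * z$3]" using Mz[of z] g by (simp add: M_def)
      also have "\<dots> = form br ksl2 n (\<beta> / (4 * 4^m)) e1 z"
        using False p4 by (simp add: form_def br mrw ke1 v3_eq)
      finally show "P n e1 z = form br ksl2 n (\<beta> / (4 * 4^m)) e1 z" .
    qed
  qed
  have bl: "\<And>x. linear (br x)" unfolding br by (rule sl2_lin)
  have bs: "\<And>t x z. br (t *\<^sub>R x) z = t *\<^sub>R br x z" unfolding br by (rule sl2_scale)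
  define V where "V x \<longleftrightarrow> (\<forall>z. P n x z = form br ksl2 n c0 x z)" for x
  have VE: "V (gE t y)" if "V y" for t y unfolding V_def
  proof (rule V_transport[OF gE_lin _ sl2_eqvE[OF br] _ _ that[unfolded V_def]])
    show "\<exists>z'. z = gE t z'" for z using gE_inv[of "-t" z] by (intro exI[of _ "gE (-t) z"]) simp
    show "br (gE t a) (gE t b) = gE t (br a b)" for a b unfolding br by (rule gE_aut)
    show "ksl2 (gE t x) = ksl2 x" for x by (rule gE_k)
  qed
  have VF: "V (gF t y)" if "V y" for t y unfolding V_def
  proof (rule V_transport[OF gF_lin _ sl2_eqvF[OF br] _ _ that[unfolded V_def]])
    show "\<exists>z'. z = gF t z'" for z using gF_inv[of "-t" z] by (intro exI[of _ "gF (-t) z"]) simp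
    show "br (gF t a) (gF t b) = gF t (br a b)" for a b unfolding br by (rule gF_aut)
    show "ksl2 (gF t x) = ksl2 x" for x by (rule gF_k)
  qed
  have Vline: "V (r *\<^sub>R e1)" for r unfolding V_def by (rule V_line[OF bl bs ksl2_hom n Ve1])
  have V1: "V x" if x2: "x$2 \<noteq> 0" and kp: "x$1^2 + x$2 * x$3 > 0" for x
  proof -
    define q where "q = sqrt (x$1^2 + x$2 * x$3)"
    have q0: "q > 0" using kp by (simp add: q_def)
    have q2: "q^2 = x$1^2 + x$2 * x$3" using kp by (simp add: q_def)
    define s where "s = (q - x$1) / x$2"
    define t where "t = - x$2 / (2 * q)"
    have "x = gF s (gE t (q *\<^sub>R e1))"
    proof -
      have c1: "q - s * x$2 = x$1" using x2 by (simp add: s_def field_simps)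
      have c3: "2 * s * q - s^2 * x$2 = x$3"
      proof -
        have "2 * s * q - s^2 * x$2 = s * (q + x$1)" using x2 by (simp add: s_def field_simps power2_eq_square)
        also have "\<dots> = (q^2 - x$1^2) / x$2" using x2 by (simp add: s_def field_simps power2_eq_square)
        also have "\<dots> = x$3" using x2 q2 by (simp add: field_simps)
        finally show ?thesis .
      qed
      have c2: "- (2 * t * q) = x$2" using q0 by (simp add: t_def field_simps)
      show ?thesis using c1 c2 c3 by (simp add: v3_eq algebra_simps)
    qed
    then show ?thesis using VF[OF VE[OF Vline]] by metis
  qed
  have Q: "ispoly (\<lambda>s. (P n (x0 + s *\<^sub>R w) z - form br ksl2 n c0 (x0 + s *\<^sub>R w) z) $ j)" for x0 w z j
  proof -
    obtain p where p: "\<forall>s. P n (x0 + s *\<^sub>R w) z $ j = poly p s" using P_poly by blast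
    have "ispoly (\<lambda>s. P n (x0 + s *\<^sub>R w) z $ j)" unfolding ispoly_def using p by blast
    then show ?thesis unfolding br using form_poly by (simp add: ispoly_diff)
  qed
  have Vext: "V x0" if T: "\<And>s. s > S \<Longrightarrow> V (x0 + s *\<^sub>R w)" for x0 w S
    unfolding V_def
  proof
    fix z
    have "(P n (x0 + 0 *\<^sub>R w) z - form br ksl2 n c0 (x0 + 0 *\<^sub>R w) z) $ j = 0" for j
      by (rule ispoly_tail[OF Q, of S]) (use T in \<open>simp add: V_def\<close>)
    then show "P n x0 z = form br ksl2 n c0 x0 z" by (simp add: vec_eq_iff)
  qed
  have V2: "V x" if x2: "x$2 \<noteq> 0" for x
  proof (rule Vext[where w = e1 and S = "\<bar>x$1\<bar> + \<bar>x$2 * x$3\<bar> + 1"])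
    fix s assume s: "s > \<bar>x$1\<bar> + \<bar>x$2 * x$3\<bar> + 1"
    have "x$1 + s \<ge> \<bar>x$2 * x$3\<bar> + 1" using s by linarith
    then have "(x$1 + s)^2 \<ge> (\<bar>x$2 * x$3\<bar> + 1)^2" by (rule power_mono) simp
    moreover have "(\<bar>x$2 * x$3\<bar> + 1)^2 > - (x$2 * x$3)"
    proof -
      define a where "a = x$2 * x$3"
      have h1: "\<bar>a\<bar> + 1 \<ge> 1" by simp
      have "(\<bar>a\<bar> + 1) * (\<bar>a\<bar> + 1) \<ge> (\<bar>a\<bar> + 1) * 1"
        by (rule mult_left_mono) (use h1 in auto)
      moreover have "\<bar>a\<bar> + 1 > - a" by linarith
      ultimately have "(\<bar>a\<bar> + 1)^2 > - a" by (simp add: power2_eq_square)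
      then show ?thesis by (simp add: a_def)
    qed
    ultimately have "(x$1 + s)^2 + x$2 * x$3 > 0" by linarith
    then show "V (x + s *\<^sub>R e1)" using x2 by (intro V1) simp_all
  qed
  have V3: "V x" for x
  proof (cases "x$2 = 0")
    case False then show ?thesis by (rule V2)
  next
    case True
    show ?thesis
    proof (rule Vext[where w = e2 and S = 0])
      fix s :: real assume "s > 0"
      then show "V (x + s *\<^sub>R e2)" using True by (intro V2) simp
    qed
  qed
  then show ?thesis unfolding V_def br by blast
qed

end


context rackctx begin

lemma sl2_main:
  assumes br: "br = sl2_bracket"
  shows "\<exists>F. real_analytic F \<and> F 0 = 1 \<and> (\<forall>x y. rk x y = lin_exp (\<lambda>z. F (killing_half br x) *\<^sub>R br x z) y)"
proof -
  have bl: "\<And>x. linear (br x)" unfolding br by (rule sl2_lin)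
  have bs: "\<And>t x z. br (t *\<^sub>R x) z = t *\<^sub>R br x z" unfolding br by (rule sl2_scale)
  have st: "\<And>n. n \<ge> 1 \<Longrightarrow> \<exists>c. \<forall>x z. P n x z = form br ksl2 n c x z"
    using sl2_struct[OF br] unfolding br by blast
  have w1: "ksl2 e1 \<noteq> 0" by (simp add: ksl2_def)
  have w2: "br e1 e2 \<noteq> 0" unfolding br by (simp add: v3_eq)
  have w3: "br e1 (br e1 e2) \<noteq> 0" unfolding br by (simp add: v3_eq)
  obtain \<beta> \<gamma> where eb: "entire_coeffs \<beta>" and ec: "entire_coeffs \<gamma>" and b0: "\<beta> 0 = 1"
    and form: "\<And>x z. rk x z = z + pser \<beta> (ksl2 x) *\<^sub>R br x z + pser \<gamma> (ksl2 x) *\<^sub>R br x (br x z)"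
    using rk_formula_ex[OF bl bs ksl2_hom st w1 w2 w3] by blast
  have rel: "2 * pser \<gamma> (1 * s) + (1 * s) * (pser \<gamma> (1 * s))^2 = (pser \<beta> (1 * s))^2" if s: "s > 0" for s :: real
  proof -
    define r where "r = sqrt s / 2"
    have r2: "4 * r^2 = s" using s by (simp add: r_def power_divide)
    define x where "x = r *\<^sub>R e1"
    have kx: "ksl2 x = s" using r2 by (simp add: ksl2_def x_def)
    define b where "b = pser \<beta> s"
    define c where "c = pser \<gamma> s"
    have x2: "rk x e2 = vector [0, 1 + 2 * r * b + 4 * r^2 * c, 0]"
      unfolding form kx b_def[symmetric] c_def[symmetric] by (simp add: br x_def v3_eq power2_eq_square)
    have x3: "rk x e3 = vector [0, 0, 1 - 2 * r * b + 4 * r^2 * c]"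
      unfolding form kx b_def[symmetric] c_def[symmetric] by (simp add: br x_def v3_eq power2_eq_square)
    have x1: "rk x e1 = e1"
      unfolding form by (simp add: br x_def v3_eq)
    have "rk x (br e2 e3) = br (rk x e2) (rk x e3)" by (rule autom)
    moreover have "br e2 e3 = e1" unfolding br by (simp add: v3_eq)
    ultimately have "e1 = sl2_bracket (vector [0, 1 + 2 * r * b + 4 * r^2 * c, 0]) (vector [0, 0, 1 - 2 * r * b + 4 * r^2 * c])"
      using x1 x2 x3 br by simp
    then have "(1 + 2 * r * b + 4 * r^2 * c) * (1 - 2 * r * b + 4 * r^2 * c) = 1" by (simp add: v3_eq)
    then have "(4 * r^2) * (2 * c + (4 * r^2) * c^2 - b^2) = 0" by (simp add: power2_eq_square algebra_simps)
    then have "2 * c + s * c^2 - b^2 = 0" using s r2 by simp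
    then show ?thesis by (simp add: b_def c_def power2_eq_square algebra_simps)
  qed
  have ad3: "\<And>x z. br x (br x (br x z)) = ksl2 x *\<^sub>R br x z" unfolding br by (rule sl2_ad3)
  have kh: "killing_half br x = ksl2 x" for x unfolding br by (rule ksl2)
  show ?thesis unfolding kh
    by (rule final_from[OF eb ec b0 _ rel form bl ad3]) simp
qed

end


definition kbsl2 :: "real^3 \<Rightarrow> real^3 \<Rightarrow> real" where
  "kbsl2 a b = 4 * a$1 * b$1 + 2 * (a$2 * b$3 + a$3 * b$2)"
definition kbso3 :: "real^3 \<Rightarrow> real^3 \<Rightarrow> real" where
  "kbso3 a b = - (a$1 * b$1 + a$2 * b$2 + a$3 * b$3)"

lemma rigid_from:
  fixes br :: "real^3 \<Rightarrow> real^3 \<Rightarrow> real^3" and kb :: "real^3 \<Rightarrow> real^3 \<Rightarrow> real"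
  assumes main: "\<And>rk. analytic_linear_lie_rack rk \<Longrightarrow> rack_bracket_is rk br \<Longrightarrow>
      \<exists>F. real_analytic F \<and> F 0 = 1 \<and> (\<forall>x y. rk x y = lin_exp (\<lambda>z. F (killing_half br x) *\<^sub>R br x z) y)"
    and l1: "\<And>b. linear (\<lambda>a. kb a b)" and l2: "\<And>a. linear (\<lambda>b. kb a b)" and sym: "\<And>a b. kb a b = kb b a"
    and inv: "\<And>y a b. kb (br y a) b + kb a (br y b) = 0" and diag: "\<And>x. kb x x = killing_half br x"
  shows "rigid br"
  unfolding rigid_def
proof (intro allI impI)
  fix rk :: "real^3 \<Rightarrow> real^3 \<Rightarrow> real^3"
  assume h: "analytic_linear_lie_rack rk \<and> rack_bracket_is rk br"
  obtain F where F: "real_analytic F" "F 0 = 1" "\<forall>x y. rk x y = lin_exp (\<lambda>z. F (killing_half br x) *\<^sub>R br x z) y"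
    using main h by blast
  define P where "P xs = kb (xs (0::nat)) (xs 1)" for xs
  have smf: "sym_multilin_form 2 P"
    unfolding sym_multilin_form_def
  proof (intro conjI allI impI)
    fix xs :: "nat \<Rightarrow> real^3" and i :: nat assume i: "i < 2"
    then consider "i = 0" | "i = 1" by linarith
    then show "linear (\<lambda>t. P (xs(i := t)))"
    proof cases
      case 1 then show ?thesis using l1[of "xs 1"] by (simp add: P_def)
    next
      case 2 then show ?thesis using l2[of "xs 0"] by (simp add: P_def)
    qed
  next
    fix xs ys :: "nat \<Rightarrow> real^3" assume "\<forall>i<2. xs i = ys i"
    then show "P xs = P ys" by (simp add: P_def)
  next
    fix xs :: "nat \<Rightarrow> real^3" and q :: "nat \<Rightarrow> nat" assume q: "q permutes {..<2}"
    have q0: "q 0 \<in> {..<2}" and q1: "q 1 \<in> {..<2}" using permutes_in_image[OF q] by simp_all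
    have qi: "q 0 \<noteq> q 1" using permutes_inj[OF q] by (metis injD zero_neq_one)
    have "(q 0 = 0 \<and> q 1 = 1) \<or> (q 0 = 1 \<and> q 1 = 0)" using q0 q1 qi by auto
    then show "P (xs \<circ> q) = P xs" using sym by (auto simp: P_def)
  qed
  have invP: "(\<Sum>i<2. P (xs(i := br y (xs i)))) = 0" for y xs
    using inv[of y "xs 0" "xs 1"] by (simp add: P_def numeral_2_eq_2)
  have "rk x y = lin_exp (\<lambda>z. F (P (\<lambda>_. x)) *\<^sub>R br x z) y" for x y
    using F(3) by (simp add: P_def diag)
  then show "\<exists>F p P. real_analytic F \<and> F 0 = 1 \<and> sym_multilin_form p P \<and>
        (\<forall>y xs. (\<Sum>i<p. P (xs(i := br y (xs i)))) = 0) \<and>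
        (\<forall>x y. rk x y = lin_exp (\<lambda>z. F (P (\<lambda>_. x)) *\<^sub>R br x z) y)"
    using F(1,2) smf invP by blast
qed

theorem theorem3:
  fixes br :: "real^3 \<Rightarrow> real^3 \<Rightarrow> real^3"
  assumes "br = sl2_bracket \<or> br = so3_bracket"
  shows "(\<forall>rk. analytic_linear_lie_rack rk \<and> rack_bracket_is rk br \<longrightarrow>
            (\<exists>F. real_analytic F \<and> F 0 = 1 \<and>
               (\<forall>x y. rk x y = lin_exp (\<lambda>z. F (killing_half br x) *\<^sub>R br x z) y)))
         \<and> rigid br"
proof -
  have main: "\<exists>F. real_analytic F \<and> F 0 = 1 \<and> (\<forall>x y. rk x y = lin_exp (\<lambda>z. F (killing_half br x) *\<^sub>R br x z) y)"
    if a: "analytic_linear_lie_rack rk" and b: "rack_bracket_is rk br" for rk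
  proof -
    interpret R: rackctx br rk by unfold_locales (rule a, rule b)
    show ?thesis using assms R.sl2_main R.so3_main by blast
  qed
  have rig: "rigid br"
    using assms
  proof
    assume br: "br = sl2_bracket"
    show "rigid br"
    proof (rule rigid_from[where kb = kbsl2, OF main])
      show "linear (\<lambda>a. kbsl2 a b)" for b by (rule linearI) (simp_all add: kbsl2_def algebra_simps)
      show "linear (\<lambda>b. kbsl2 a b)" for a by (rule linearI) (simp_all add: kbsl2_def algebra_simps)
      show "kbsl2 a b = kbsl2 b a" for a b by (simp add: kbsl2_def algebra_simps)
      show "kbsl2 (br y a) b + kbsl2 a (br y b) = 0" for y a b by (simp add: br kbsl2_def algebra_simps)
      show "kbsl2 x x = killing_half br x" for x by (simp add: br ksl2 ksl2_def kbsl2_def power2_eq_square)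
    qed
  next
    assume br: "br = so3_bracket"
    show "rigid br"
    proof (rule rigid_from[where kb = kbso3, OF main])
      show "linear (\<lambda>a. kbso3 a b)" for b by (rule linearI) (simp_all add: kbso3_def algebra_simps)
      show "linear (\<lambda>b. kbso3 a b)" for a by (rule linearI) (simp_all add: kbso3_def algebra_simps)
      show "kbso3 a b = kbso3 b a" for a b by (simp add: kbso3_def algebra_simps)
      show "kbso3 (br y a) b + kbso3 a (br y b) = 0" for y a b by (simp add: br kbso3_def algebra_simps)
      show "kbso3 x x = killing_half br x" for x by (simp add: br kso3 kso3_def kbso3_def power2_eq_square)
    qed
  qed
  show ?thesis using main rig by blast
qed


end
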